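(* Let $\Omega\subset\mathbb R^{m+n}$ be a bounded open set with $C^2$ uniformly convex boundary and let $\Gamma\subset\partial\Omega$ be a compact $C^2$ $(m-1)$-dimensional submanifold without boundary. For $q\in\Gamma$ let $\nu(q)$ be the interior unit normal to $\partial\Omega$ at $q$. Then there is $\vartheta\in(0,\frac\pi2)$, depending only on $\Gamma$ and $\Omega$, such that the convex hull of $\Gamma$ satisfies $$\mathrm{ch}(\Gamma)\subset\bigcap_{q\in\Gamma}\big(q+W(T_q\Gamma,\nu(q),\vartheta)\big).$$
   Context: For an $(m-1)$-dimensional linear subspace $V\subset\mathbb R^{m+n}$ let $\mathbf p_V$ be the orthogonal projection onto $V$. For a unit vector $\nu\perp V$ and $\vartheta\in(0,\frac\pi2)$, the wedge with spine $V$, axis $\nu$ and opening angle $\vartheta$ is $W(V,\nu,\vartheta)=\{y:\ |y-\mathbf p_V(y)-(y\cdot\nu)\nu|\le(\tan\vartheta)\,y\cdot\nu\}$. $T_q\Gamma$ denotes the tangent space of $\Gamma$ at $q$ (viewed as a linear subspace). *)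

theory Defs
  imports "HOL-Analysis.Analysis"
begin

definition C2_on :: "'a::euclidean_space set \<Rightarrow> ('a \<Rightarrow> 'b::euclidean_space) \<Rightarrow> bool" where
  "C2_on U f \<longleftrightarrow>
     (\<exists>(Df :: 'a \<Rightarrow> 'a \<Rightarrow>\<^sub>L 'b) (D2f :: 'a \<Rightarrow> 'a \<Rightarrow>\<^sub>L ('a \<Rightarrow>\<^sub>L 'b)).
        (\<forall>x\<in>U. (f has_derivative blinfun_apply (Df x)) (at x)) \<and>
        (\<forall>x\<in>U. (Df has_derivative blinfun_apply (D2f x)) (at x)) \<and>
        continuous_on U D2f)"

text \<open>Embedded C^2 submanifold (without boundary) of dimension k: locally the zero
  set of a C^2 submersion onto a (DIM - k)-dimensional linear space.\<close>
definition C2_submanifold :: "'a::euclidean_space set \<Rightarrow> nat \<Rightarrow> bool" where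
  "C2_submanifold M k \<longleftrightarrow> k \<le> DIM('a) \<and>
     (\<forall>p\<in>M. \<exists>U (F :: 'a \<Rightarrow> 'a) S.
        open U \<and> p \<in> U \<and> subspace S \<and> dim S = DIM('a) - k \<and>
        C2_on U F \<and> (\<forall>x\<in>U. F x \<in> S) \<and>
        (\<forall>x\<in>U. range (frechet_derivative F (at x)) = S) \<and>
        M \<inter> U = {x\<in>U. F x = 0})"

definition tangent_space :: "'a::euclidean_space set \<Rightarrow> 'a \<Rightarrow> 'a set" where
  "tangent_space M q = {v. \<exists>\<gamma> :: real \<Rightarrow> 'a. \<gamma> 0 = q \<and> (\<gamma> has_vector_derivative v) (at 0) \<and>
        (\<exists>\<epsilon>>0. \<forall>t. \<bar>t\<bar> < \<epsilon> \<longrightarrow> \<gamma> t \<in> M)}"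

text \<open>Bounded open convex domain with C^2 uniformly convex boundary: defining function
  rho near the boundary, nonvanishing gradient on the boundary, and Hessian on tangent
  vectors bounded below by kappa |grad rho| |v|^2 (principal curvatures >= kappa > 0).\<close>
definition C2_uniformly_convex_domain :: "'a::euclidean_space set \<Rightarrow> bool" where
  "C2_uniformly_convex_domain \<Omega> \<longleftrightarrow> convex \<Omega> \<and>
     (\<exists>U (\<rho> :: 'a \<Rightarrow> real) (D\<rho> :: 'a \<Rightarrow> 'a \<Rightarrow>\<^sub>L real) (D2\<rho> :: 'a \<Rightarrow> 'a \<Rightarrow>\<^sub>L ('a \<Rightarrow>\<^sub>L real)) \<kappa>.
        open U \<and> frontier \<Omega> \<subseteq> U \<and>
        (\<forall>x\<in>U. (\<rho> has_derivative blinfun_apply (D\<rho> x)) (at x)) \<and>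
        (\<forall>x\<in>U. (D\<rho> has_derivative blinfun_apply (D2\<rho> x)) (at x)) \<and>
        continuous_on U D2\<rho> \<and>
        \<Omega> \<inter> U = {x\<in>U. \<rho> x < 0} \<and>
        (\<forall>x\<in>frontier \<Omega>. D\<rho> x \<noteq> 0) \<and>
        \<kappa> > 0 \<and>
        (\<forall>x\<in>frontier \<Omega>. \<forall>v. D\<rho> x v = 0 \<longrightarrow>
            D2\<rho> x v v \<ge> \<kappa> * norm (D\<rho> x) * (norm v)\<^sup>2))"

definition interior_normal :: "'a::euclidean_space set \<Rightarrow> 'a \<Rightarrow> 'a" where
  "interior_normal \<Omega> q = (THE \<nu>. norm \<nu> = 1 \<and>
      (\<forall>v\<in>tangent_space (frontier \<Omega>) q. \<nu> \<bullet> v = 0) \<and>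
      (\<exists>\<epsilon>>0. \<forall>t. 0 < t \<and> t < \<epsilon> \<longrightarrow> q + t *\<^sub>R \<nu> \<in> \<Omega>))"

definition orth_proj :: "'a::euclidean_space set \<Rightarrow> 'a \<Rightarrow> 'a" where
  "orth_proj V y = (THE v. v \<in> V \<and> (\<forall>w\<in>V. (y - v) \<bullet> w = 0))"

definition wedge :: "'a::euclidean_space set \<Rightarrow> 'a \<Rightarrow> real \<Rightarrow> 'a set" where
  "wedge V \<nu> \<theta> = {y. norm (y - orth_proj V y - (y \<bullet> \<nu>) *\<^sub>R \<nu>) \<le> tan \<theta> * (y \<bullet> \<nu>)}"

end

theory Submission
  imports Defs
begin


lemma orth_proj_char:
  fixes V :: "'a::euclidean_space set"
  assumes V: "subspace V"
  shows "orth_proj V y \<in> V \<and> (\<forall>w\<in>V. (y - orth_proj V y) \<bullet> w = 0)"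
proof -
  obtain a z where a: "a \<in> span V" and z: "\<And>w. w \<in> span V \<Longrightarrow> orthogonal z w" and y: "y = a + z"
    using orthogonal_subspace_decomp_exists[of V y] by blast
  have sV: "span V = V" using V by (simp add: span_eq_iff)
  have P: "a \<in> V \<and> (\<forall>w\<in>V. (y - a) \<bullet> w = 0)"
    using a z y sV by (auto simp: orthogonal_def)
  have U: "v = a" if "v \<in> V \<and> (\<forall>w\<in>V. (y - v) \<bullet> w = 0)" for v
  proof -
    have d: "v - a \<in> V" using that P V by (simp add: subspace_diff)
    have "(y - a) \<bullet> (v - a) = 0" "(y - v) \<bullet> (v - a) = 0" using P that d by auto
    then have "(v - a) \<bullet> (v - a) = 0" by (simp add: inner_diff_left inner_diff_right inner_commute)
    then show ?thesis by simp
  qed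
  show ?thesis unfolding orth_proj_def
  proof (rule theI[where a=a])
    show "a \<in> V \<and> (\<forall>w\<in>V. (y - a) \<bullet> w = 0)" using P .
    fix v assume "v \<in> V \<and> (\<forall>w\<in>V. (y - v) \<bullet> w = 0)"
    then show "v = a" by (rule U)
  qed
qed

lemma orth_proj_unique:
  fixes V :: "'a::euclidean_space set"
  assumes V: "subspace V" and "v \<in> V" and "\<forall>w\<in>V. (y - v) \<bullet> w = 0"
  shows "orth_proj V y = v"
proof -
  have P: "orth_proj V y \<in> V" "\<forall>w\<in>V. (y - orth_proj V y) \<bullet> w = 0" using orth_proj_char[OF V] by auto
  have d: "v - orth_proj V y \<in> V" using P assms by (simp add: subspace_diff)
  have "(y - v) \<bullet> (v - orth_proj V y) = 0" "(y - orth_proj V y) \<bullet> (v - orth_proj V y) = 0"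
    using P assms d by auto
  then have "(v - orth_proj V y) \<bullet> (v - orth_proj V y) = 0"
    by (simp add: inner_diff_left inner_diff_right inner_commute)
  then show ?thesis by simp
qed

lemma orth_proj_min:
  fixes V :: "'a::euclidean_space set"
  assumes V: "subspace V" and k: "k \<in> V"
  shows "norm (y - orth_proj V y) \<le> norm (y - k)"
proof -
  let ?P = "orth_proj V y"
  have P: "?P \<in> V" "\<forall>w\<in>V. (y - ?P) \<bullet> w = 0" using orth_proj_char[OF V] by auto
  have d: "?P - k \<in> V" using P k V by (simp add: subspace_diff)
  have "(y - ?P) \<bullet> (?P - k) = 0" using P d by auto
  then have "(norm (y - k))\<^sup>2 = (norm (y - ?P))\<^sup>2 + (norm (?P - k))\<^sup>2"
    using norm_add_Pythagorean[of "y - ?P" "?P - k"] by (simp add: orthogonal_def)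
  then have "(norm (y - ?P))\<^sup>2 \<le> (norm (y - k))\<^sup>2" by simp
  then show ?thesis by (simp add: power2_le_iff_abs_le)
qed

lemma orth_proj_comb:
  fixes V :: "'a::euclidean_space set"
  assumes V: "subspace V"
  shows "orth_proj V (a *\<^sub>R x + b *\<^sub>R y) = a *\<^sub>R orth_proj V x + b *\<^sub>R orth_proj V y"
proof (rule orth_proj_unique[OF V])
  have P: "orth_proj V x \<in> V" "\<forall>w\<in>V. (x - orth_proj V x) \<bullet> w = 0"
     "orth_proj V y \<in> V" "\<forall>w\<in>V. (y - orth_proj V y) \<bullet> w = 0" using orth_proj_char[OF V] by auto
  show "a *\<^sub>R orth_proj V x + b *\<^sub>R orth_proj V y \<in> V"
    using P V by (simp add: subspace_add subspace_scale)
  show "\<forall>w\<in>V. (a *\<^sub>R x + b *\<^sub>R y - (a *\<^sub>R orth_proj V x + b *\<^sub>R orth_proj V y)) \<bullet> w = 0"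
  proof
    fix w assume w: "w \<in> V"
    have "(a *\<^sub>R x + b *\<^sub>R y - (a *\<^sub>R orth_proj V x + b *\<^sub>R orth_proj V y)) \<bullet> w
       = a * ((x - orth_proj V x) \<bullet> w) + b * ((y - orth_proj V y) \<bullet> w)"
      by (simp add: algebra_simps inner_diff_left inner_add_left)
    then show "(a *\<^sub>R x + b *\<^sub>R y - (a *\<^sub>R orth_proj V x + b *\<^sub>R orth_proj V y)) \<bullet> w = 0"
      using P w by simp
  qed
qed

lemma wedge_convex:
  fixes V :: "'a::euclidean_space set"
  assumes V: "subspace V"
  shows "convex (wedge V \<nu> \<theta>)"
proof (rule convexI)
  fix x y and u v :: real
  assume x: "x \<in> wedge V \<nu> \<theta>" and y: "y \<in> wedge V \<nu> \<theta>" and uv0: "0 \<le> u" "0 \<le> v" "u + v = 1"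
  then have uv: "0 \<le> u \<and> 0 \<le> v \<and> u + v = 1" by simp
  define N where "N z = z - orth_proj V z - (z \<bullet> \<nu>) *\<^sub>R \<nu>" for z
  have NL: "N (u *\<^sub>R x + v *\<^sub>R y) = u *\<^sub>R N x + v *\<^sub>R N y"
    unfolding N_def orth_proj_comb[OF V] by (simp add: algebra_simps inner_add_left)
  have nx: "norm (N x) \<le> tan \<theta> * (x \<bullet> \<nu>)" and ny: "norm (N y) \<le> tan \<theta> * (y \<bullet> \<nu>)"
    using x y by (auto simp: wedge_def N_def)
  have "norm (N (u *\<^sub>R x + v *\<^sub>R y)) \<le> u * norm (N x) + v * norm (N y)"
    unfolding NL using uv by (metis abs_of_nonneg norm_scaleR norm_triangle_ineq)
  also have "\<dots> \<le> u * (tan \<theta> * (x \<bullet> \<nu>)) + v * (tan \<theta> * (y \<bullet> \<nu>))"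
    using uv nx ny by (simp add: add_mono mult_left_mono)
  also have "\<dots> = tan \<theta> * ((u *\<^sub>R x + v *\<^sub>R y) \<bullet> \<nu>)" by (simp add: algebra_simps inner_add_left)
  finally show "u *\<^sub>R x + v *\<^sub>R y \<in> wedge V \<nu> \<theta>" by (simp add: wedge_def N_def)
qed

lemma lin_inv:
  fixes f :: "'a::euclidean_space \<Rightarrow> 'b::euclidean_space"
  assumes f: "linear f"
  obtains c g where "c > 0" "linear g" "\<And>y. norm (g y) \<le> c * norm y"
    "\<And>y. g y \<in> orthogonal_comp (f -` {0})"
    "\<And>w. w \<in> orthogonal_comp (f -` {0}) \<Longrightarrow> g (f w) = w"
    "\<And>y. y \<in> range f \<Longrightarrow> f (g y) = y"
    "\<And>x. \<exists>w \<in> orthogonal_comp (f -` {0}). f w = f x"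
proof -
  let ?K = "f -` {0}" let ?W = "orthogonal_comp ?K"
  have sK: "subspace ?K" using f by (auto simp: subspace_def linear_0 linear_add linear_scale)
  have sW: "subspace ?W" by (rule subspace_orthogonal_comp)
  have dec: "\<exists>w \<in> ?W. f w = f x" for x
  proof -
    obtain a z where a: "a \<in> span ?K" and z: "\<And>w. w \<in> span ?K \<Longrightarrow> orthogonal z w" and y: "x = a + z"
      using orthogonal_subspace_decomp_exists[of ?K x] by blast
    have e: "span ?K = ?K" by (rule span_eq_iff[THEN iffD2, OF sK])
    have "a \<in> ?K" using a e by metis
    then have "f x = f z" using y f by (simp add: linear_add)
    moreover have "z \<in> ?W" using z by (auto simp: orthogonal_comp_def orthogonal_commute span_base)
    ultimately show ?thesis by auto
  qed
  have spW: "span ?W = ?W" by (rule span_eq_iff[THEN iffD2, OF sW])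
  have inj: "inj_on f (span ?W)"
  proof -
    have "inj_on f ?W"
    proof (rule inj_onI)
      fix x y assume "x \<in> ?W" "y \<in> ?W" "f x = f y"
      then have "x - y \<in> ?K" "x - y \<in> ?W" using f sW by (auto simp: linear_diff subspace_diff)
      then have "x - y = 0" using orthogonal_Int_0[OF sK] by blast
      then show "x = y" by simp
    qed
    then show ?thesis using spW by metis
  qed
  obtain g where g: "range g \<subseteq> span ?W" "linear g" "\<forall>x\<in>span ?W. g (f x) = x"
    using linear_inj_on_left_inverse[OF f inj] by blast
  obtain B where B: "B > 0" "\<And>y. norm (g y) \<le> B * norm y"
    using linear_bounded_pos[OF g(2)] by blast
  have fg: "f (g y) = y" if yr: "y \<in> range f" for y
  proof -
    obtain x where x: "y = f x" using yr by auto
    obtain w where w: "w \<in> ?W" "f w = f x" using dec by blast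
    show ?thesis using g w x spW by auto
  qed
  show ?thesis
    apply (rule that[OF B(1) g(2) B(2)])
    using g spW fg dec by auto
qed



lemma mvt_lin:
  fixes F :: "'a::euclidean_space \<Rightarrow> 'b::euclidean_space"
  assumes S: "convex S"
    and der: "\<And>z. z \<in> S \<Longrightarrow> (F has_derivative blinfun_apply (Df z)) (at z)"
    and B: "\<And>z. z \<in> S \<Longrightarrow> norm (Df z - L) \<le> B"
    and x: "x \<in> S" and y: "y \<in> S"
  shows "norm (F x - F y - blinfun_apply L (x - y)) \<le> B * norm (x - y)"
proof -
  define G where "G z = F z - blinfun_apply L z" for z
  have dG: "(G has_derivative blinfun_apply (Df z - L)) (at z within S)" if "z \<in> S" for z
  proof -
    have "(G has_derivative (\<lambda>h. blinfun_apply (Df z) h - blinfun_apply L h)) (at z)"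
      unfolding G_def by (intro has_derivative_diff der that bounded_linear_imp_has_derivative blinfun.bounded_linear_right)
    moreover have "blinfun_apply (Df z - L) = (\<lambda>h. blinfun_apply (Df z) h - blinfun_apply L h)"
      by (rule ext) (simp add: blinfun.diff_left)
    ultimately show ?thesis by (simp add: has_derivative_at_withinI)
  qed
  have "norm (G x - G y) \<le> B * norm (x - y)"
    by (rule differentiable_bound[OF S dG _ x y]) (use B in \<open>simp_all add: norm_blinfun.rep_eq[symmetric]\<close>)
  then show ?thesis by (simp add: G_def blinfun.diff_right algebra_simps)
qed

lemma lipschitz_D:
  fixes Df :: "'a::euclidean_space \<Rightarrow> 'a \<Rightarrow>\<^sub>L 'b::euclidean_space"
  assumes S: "convex S"
    and der: "\<And>z. z \<in> S \<Longrightarrow> (Df has_derivative blinfun_apply (D2f z)) (at z)"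
    and B: "\<And>z. z \<in> S \<Longrightarrow> norm (D2f z) \<le> M"
    and x: "x \<in> S" and y: "y \<in> S"
  shows "norm (Df x - Df y) \<le> M * norm (x - y)"
  by (rule differentiable_bound[OF S _ _ x y, where f'="\<lambda>z. blinfun_apply (D2f z)"])
    (use der B in \<open>auto simp add: norm_blinfun.rep_eq[symmetric] has_derivative_at_withinI\<close>)

lemma curve_exists:
  fixes F :: "'a::euclidean_space \<Rightarrow> 'b::euclidean_space"
  assumes U: "open U" "q \<in> U" and F0: "F q = 0"
    and der: "\<And>x. x \<in> U \<Longrightarrow> (F has_derivative blinfun_apply (Df x)) (at x)"
    and cont: "isCont Df q"
    and rng: "\<And>x. x \<in> U \<Longrightarrow> F x \<in> range (blinfun_apply (Df q))"
    and v: "blinfun_apply (Df q) v = 0"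
  shows "\<exists>\<gamma>. \<gamma> 0 = q \<and> (\<gamma> has_vector_derivative v) (at 0) \<and>
           (\<exists>\<epsilon>>0. \<forall>t. \<bar>t\<bar> < \<epsilon> \<longrightarrow> \<gamma> t \<in> U \<and> F (\<gamma> t) = 0)"
proof -
  let ?A = "blinfun_apply (Df q)"
  have linA: "linear ?A" by (simp add: blinfun.bounded_linear_right bounded_linear.linear)
  obtain c g where c: "c > 0" and glin: "linear g" and gb: "\<And>y. norm (g y) \<le> c * norm y"
    and gW: "\<And>y. g y \<in> orthogonal_comp (?A -` {0})"
    and gA: "\<And>w. w \<in> orthogonal_comp (?A -` {0}) \<Longrightarrow> g (?A w) = w"
    and Ag: "\<And>y. y \<in> range ?A \<Longrightarrow> ?A (g y) = y"
    and dec: "\<And>x. \<exists>w \<in> orthogonal_comp (?A -` {0}). ?A w = ?A x"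
    by (rule lin_inv[OF linA]) blast
  define W where "W = orthogonal_comp (?A -` {0})"
  have sW: "subspace W" unfolding W_def by (rule subspace_orthogonal_comp)
  obtain \<delta>0 where d0: "\<delta>0 > 0" "ball q \<delta>0 \<subseteq> U" using U(1) U(2) unfolding open_contains_ball by force
  have c2: "1 / (2*c) > 0" using c by simp
  obtain \<delta>1 where d1: "\<delta>1 > 0" "\<And>z. dist z q < \<delta>1 \<Longrightarrow> dist (Df z) (Df q) < 1 / (2*c)"
  proof -
    have "\<exists>\<delta>>0. \<forall>z. dist z q < \<delta> \<longrightarrow> dist (Df z) (Df q) < 1/(2*c)"
      using cont c2 unfolding continuous_at_eps_delta by simp
    then show ?thesis using that by auto
  qed
  define \<delta> where "\<delta> = min \<delta>0 \<delta>1"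
  have dpos: "\<delta> > 0" using d0 d1 by (simp add: \<delta>_def)
  have ballU: "ball q \<delta> \<subseteq> U" using d0 by (auto simp: \<delta>_def)
  have Dsmall: "norm (Df z - Df q) \<le> 1 / (2*c)" if "z \<in> ball q \<delta>" for z
  proof -
    have "dist z q < \<delta>1" using that by (simp add: \<delta>_def dist_commute)
    then have "dist (Df z) (Df q) < 1 / (2*c)" by (rule d1(2))
    then show ?thesis by (simp add: dist_norm)
  qed
  have mvt: "norm (F x1 - F x2 - ?A (x1 - x2)) \<le> 1 / (2*c) * norm (x1 - x2)"
    if "x1 \<in> ball q \<delta>" "x2 \<in> ball q \<delta>" for x1 x2
  proof (rule mvt_lin[OF convex_ball _ _ that])
    fix z assume z: "z \<in> ball q \<delta>"
    show "(F has_derivative blinfun_apply (Df z)) (at z)" using z ballU der by blast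
    show "norm (Df z - Df q) \<le> 1 / (2*c)" using z by (rule Dsmall)
  qed
  define \<phi> where "\<phi> t = F (q + t *\<^sub>R v)" for t
  have dphi: "(\<phi> has_derivative (\<lambda>s. ?A (s *\<^sub>R v))) (at 0)"
  proof -
    have i: "((\<lambda>t. q + t *\<^sub>R v) has_derivative (\<lambda>s. s *\<^sub>R v)) (at 0)"
      by (auto intro!: derivative_eq_intros)
    have o: "(F has_derivative ?A) (at ((\<lambda>t. q + t *\<^sub>R v) 0))" using der U by simp
    have "\<phi> = (\<lambda>x. F (q + x *\<^sub>R v))" by (rule ext) (simp add: \<phi>_def)
    then show ?thesis using has_derivative_compose[OF i o] by simp
  qed
  have dphi0: "(\<phi> has_derivative (\<lambda>s. 0)) (at 0)"
    using dphi v by (simp add: blinfun.scaleR_right)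
  have phi0: "\<phi> 0 = 0" using F0 by (simp add: \<phi>_def)
  have contphi: "isCont \<phi> 0" using dphi by (rule has_derivative_continuous)
  have c4: "\<delta> / (4*c) > 0" using c dpos by simp
  obtain e1 where e1: "e1 > 0" "\<And>t. dist t 0 < e1 \<Longrightarrow> dist (\<phi> t) (\<phi> 0) < \<delta> / (4*c)"
    using contphi c4 unfolding continuous_at_eps_delta by blast
  define \<epsilon> where "\<epsilon> = min e1 (\<delta> / (2 * (norm v + 1)))"
  have nv: "0 < norm v + 1" by (rule add_nonneg_pos) simp_all
  have "\<delta> / (2 * (norm v + 1)) > 0" by (intro divide_pos_pos mult_pos_pos dpos nv) simp
  then have epos: "\<epsilon> > 0" using e1 by (simp add: \<epsilon>_def)
  have small: "norm (t *\<^sub>R v) < \<delta>/2 \<and> 2 * c * norm (\<phi> t) < \<delta>/2" if "\<bar>t\<bar> < \<epsilon>" for t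
  proof
    have "\<bar>t\<bar> * norm v \<le> \<bar>t\<bar> * (norm v + 1)" by (simp add: mult_left_mono)
    also have "\<dots> < \<delta> / (2 * (norm v + 1)) * (norm v + 1)"
      using that nv by (intro mult_strict_right_mono) (auto simp: \<epsilon>_def)
    also have "\<dots> = \<delta>/2" using nv by (simp add: field_simps)
    finally show "norm (t *\<^sub>R v) < \<delta>/2" by simp
    have "norm (\<phi> t) < \<delta> / (4*c)" using e1(2)[of t] that phi0 by (simp add: \<epsilon>_def dist_norm)
    then have "2 * c * norm (\<phi> t) < 2 * c * (\<delta> / (4*c))" using c by (intro mult_strict_left_mono) simp_all
    then show "2 * c * norm (\<phi> t) < \<delta>/2" using c by simp
  qed
  define r where "r t = 2 * c * norm (\<phi> t)" for t
  define S where "S t = W \<inter> cball 0 (r t)" for t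
  define T where "T t w = w - g (F (q + t *\<^sub>R v + w))" for t w
  have fix_ex: "\<exists>w. w \<in> S t \<and> T t w = w" if t: "\<bar>t\<bar> < \<epsilon>" for t
  proof -
    have inball: "q + t *\<^sub>R v + w \<in> ball q \<delta>" if "w \<in> S t" for w
    proof -
      have "norm (t *\<^sub>R v + w) \<le> norm (t *\<^sub>R v) + norm w" by (rule norm_triangle_ineq)
      also have "\<dots> < \<delta>" using small[OF t] that by (auto simp: S_def r_def)
      finally have "norm (-(t *\<^sub>R v + w)) < \<delta>" by (simp only: norm_minus_cancel)
      moreover have "q - (q + t *\<^sub>R v + w) = -(t *\<^sub>R v + w)" by (simp add: algebra_simps)
      ultimately show ?thesis by (simp only: mem_ball dist_norm)
    qed
    have lip: "norm (T t w1 - T t w2) \<le> 1/2 * norm (w1 - w2)" if "w1 \<in> S t" "w2 \<in> S t" for w1 w2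
    proof -
      have w12: "w1 - w2 \<in> W" using that sW by (auto simp: S_def subspace_diff)
      have "T t w1 - T t w2 = g (?A (w1 - w2)) - g (F (q + t *\<^sub>R v + w1)) + g (F (q + t *\<^sub>R v + w2))"
        using gA[of "w1 - w2"] w12 by (simp add: T_def W_def algebra_simps)
      also have "\<dots> = - g (F (q + t *\<^sub>R v + w1) - F (q + t *\<^sub>R v + w2) - ?A ((q + t *\<^sub>R v + w1) - (q + t *\<^sub>R v + w2)))"
        using glin by (simp add: linear_diff linear_add linear_neg algebra_simps)
      finally have "norm (T t w1 - T t w2) \<le> c * norm (F (q + t *\<^sub>R v + w1) - F (q + t *\<^sub>R v + w2) - ?A ((q + t *\<^sub>R v + w1) - (q + t *\<^sub>R v + w2)))"
        using gb by (simp only: norm_minus_cancel)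
      also have "\<dots> \<le> c * (1 / (2*c) * norm ((q + t *\<^sub>R v + w1) - (q + t *\<^sub>R v + w2)))"
        by (rule mult_left_mono[OF mvt[OF inball[OF that(1)] inball[OF that(2)]]]) (use c in simp)
      also have "\<dots> = 1/2 * norm (w1 - w2)" using c by simp
      finally show ?thesis .
    qed
    have T0: "norm (T t 0) \<le> r t / 2"
    proof -
      have "norm (T t 0) = norm (g (F (q + t *\<^sub>R v)))" by (simp add: T_def)
      also have "\<dots> \<le> c * norm (\<phi> t)" using gb by (simp add: \<phi>_def)
      finally show ?thesis by (simp add: r_def)
    qed
    have S0: "0 \<in> S t" using sW c by (simp add: S_def r_def subspace_0)
    have maps: "T t ` S t \<subseteq> S t"
    proof
      fix y assume "y \<in> T t ` S t"
      then obtain w where w: "w \<in> S t" "y = T t w" by blast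
      have "y \<in> W" using w sW gW by (auto simp: T_def S_def W_def subspace_diff)
      moreover have "norm y \<le> r t"
      proof -
        have "norm y \<le> norm (T t w - T t 0) + norm (T t 0)" using w(2) norm_triangle_sub[of "T t w" "T t 0"] by (simp add: add.commute)
        also have "\<dots> \<le> 1/2 * norm (w - 0) + r t / 2" using lip[OF w(1) S0] T0 by simp
        also have "\<dots> \<le> r t" using w(1) by (simp add: S_def)
        finally show ?thesis .
      qed
      ultimately show "y \<in> S t" by (simp add: S_def)
    qed
    have comp: "complete (S t)"
      unfolding complete_eq_closed S_def by (rule closed_Int[OF closed_subspace[OF sW] closed_cball])
    have "\<exists>!w\<in>S t. T t w = w"
      by (rule Banach_fix[OF comp _ _ _ maps, of "1/2"]) (use S0 lip in \<open>auto simp: dist_norm\<close>)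
    then show ?thesis by blast
  qed
  define w where "w t = (SOME w. w \<in> S t \<and> T t w = w)" for t
  have wprop: "w t \<in> S t \<and> T t (w t) = w t" if "\<bar>t\<bar> < \<epsilon>" for t
    unfolding w_def using someI_ex[OF fix_ex[OF that]] .
  define \<gamma> where "\<gamma> t = q + t *\<^sub>R v + w t" for t
  have ginU: "\<gamma> t \<in> ball q \<delta>" if t: "\<bar>t\<bar> < \<epsilon>" for t
  proof -
    have "norm (t *\<^sub>R v + w t) \<le> norm (t *\<^sub>R v) + norm (w t)" by (rule norm_triangle_ineq)
    also have "\<dots> < \<delta>" using small[OF t] wprop[OF t] by (auto simp: S_def r_def)
    finally have "norm (-(t *\<^sub>R v + w t)) < \<delta>" by (simp only: norm_minus_cancel)
    moreover have "q - \<gamma> t = -(t *\<^sub>R v + w t)" by (simp add: algebra_simps \<gamma>_def)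
    ultimately show ?thesis by (simp only: mem_ball dist_norm)
  qed
  have gzero: "F (\<gamma> t) = 0" if t: "\<bar>t\<bar> < \<epsilon>" for t
  proof -
    have "g (F (\<gamma> t)) = 0" using wprop[OF t] by (simp add: T_def \<gamma>_def)
    moreover have "F (\<gamma> t) \<in> range ?A" using rng ginU[OF t] ballU by blast
    ultimately show ?thesis using Ag[of "F (\<gamma> t)"] linA by (metis linear_0)
  qed
  have wbound: "norm (w t) \<le> 2 * c * norm (\<phi> t)" if "\<bar>t\<bar> < \<epsilon>" for t
    using wprop[OF that] by (simp add: S_def r_def)
  have w0: "w 0 = 0" using wbound[of 0] epos phi0 by simp
  have dw: "(w has_derivative (\<lambda>s. 0)) (at 0)"
    unfolding has_derivative_iff_norm
  proof (intro conjI)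
    show "bounded_linear (\<lambda>s::real. 0::'a)" by (rule bounded_linear_zero)
    have lim: "((\<lambda>y. norm (\<phi> y - \<phi> 0 - 0) / norm (y - 0)) \<longlongrightarrow> 0) (at 0)"
      using dphi0 unfolding has_derivative_iff_norm by simp
    have "((\<lambda>y. 2 * c * (norm (\<phi> y - \<phi> 0 - 0) / norm (y - 0))) \<longlongrightarrow> 2 * c * 0) (at 0)"
      by (intro tendsto_mult tendsto_const lim)
    then have lim2: "((\<lambda>y. 2 * c * (norm (\<phi> y - \<phi> 0 - 0) / norm (y - 0))) \<longlongrightarrow> 0) (at 0)" by simp
    have ev: "\<forall>\<^sub>F y in at 0. norm (norm (w y - w 0 - 0) / norm (y - 0)) \<le> 2 * c * (norm (\<phi> y - \<phi> 0 - 0) / norm (y - 0))"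
    proof -
      have "\<forall>\<^sub>F y in at (0::real). \<bar>y\<bar> < \<epsilon>"
        unfolding eventually_at using epos by (auto simp: dist_norm)
      then show ?thesis
      proof (rule eventually_mono)
        fix y :: real assume "\<bar>y\<bar> < \<epsilon>"
        then have "norm (w y) \<le> 2 * c * norm (\<phi> y)" by (rule wbound)
        then have "norm (w y) / \<bar>y\<bar> \<le> 2 * c * norm (\<phi> y) / \<bar>y\<bar>" by (simp add: divide_right_mono)
        then show "norm (norm (w y - w 0 - 0) / norm (y - 0)) \<le> 2 * c * (norm (\<phi> y - \<phi> 0 - 0) / norm (y - 0))"
          using w0 phi0 by simp
      qed
    qed
    show "((\<lambda>y. norm (w y - w 0 - 0) / norm (y - 0)) \<longlongrightarrow> 0) (at 0)"
      by (rule Lim_null_comparison[OF ev lim2])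
  qed
  have dg: "(\<gamma> has_vector_derivative v) (at 0)"
  proof -
    have "(\<gamma> has_derivative (\<lambda>s. s *\<^sub>R v + 0)) (at 0)"
      unfolding \<gamma>_def by (intro has_derivative_add dw has_derivative_add_const) (auto intro!: derivative_eq_intros)
    then show ?thesis by (simp add: has_vector_derivative_def)
  qed
  have "\<gamma> 0 = q" using w0 by (simp add: \<gamma>_def)
  then show ?thesis using dg epos ginU gzero ballU by blast
qed




lemma tangent_space_eq:
  fixes F :: "'a::euclidean_space \<Rightarrow> 'b::euclidean_space"
  assumes U: "open U" "q \<in> U" and MU: "M \<inter> U = {x\<in>U. F x = 0}" and qM: "q \<in> M"
    and der: "\<And>x. x \<in> U \<Longrightarrow> (F has_derivative blinfun_apply (Df x)) (at x)"
    and cont: "isCont Df q"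
    and rng: "\<And>x. x \<in> U \<Longrightarrow> F x \<in> range (blinfun_apply (Df q))"
  shows "tangent_space M q = {v. blinfun_apply (Df q) v = 0}"
proof (intro equalityI subsetI)
  have F0: "F q = 0" using qM U MU by auto
  fix v assume "v \<in> tangent_space M q"
  then obtain \<gamma> \<epsilon> where g0: "\<gamma> 0 = q" and dg: "(\<gamma> has_vector_derivative v) (at 0)"
    and e: "\<epsilon> > 0" "\<And>t. \<bar>t\<bar> < \<epsilon> \<Longrightarrow> \<gamma> t \<in> M"
    unfolding tangent_space_def by blast
  obtain e0 where e0: "e0 > 0" "ball q e0 \<subseteq> U" using U(1) U(2) unfolding open_contains_ball by force
  have dg': "(\<gamma> has_derivative (\<lambda>s. s *\<^sub>R v)) (at 0)" using dg by (simp add: has_vector_derivative_def)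
  have "isCont \<gamma> 0" using dg' by (rule has_derivative_continuous)
  then have "\<exists>d>0. \<forall>t. dist t 0 < d \<longrightarrow> dist (\<gamma> t) (\<gamma> 0) < e0"
    using e0 unfolding continuous_at_eps_delta by simp
  then obtain d where d: "d > 0" "\<And>t. dist t 0 < d \<Longrightarrow> dist (\<gamma> t) (\<gamma> 0) < e0" by blast
  have o: "(F has_derivative blinfun_apply (Df q)) (at (\<gamma> 0))" using der U g0 by simp
  have comp: "((\<lambda>t. F (\<gamma> t)) has_derivative (\<lambda>s. blinfun_apply (Df q) (s *\<^sub>R v))) (at 0)"
    using has_derivative_compose[OF dg' o] .
  define D where "D = min d \<epsilon>"
  have Dpos: "D > 0" using d e by (simp add: D_def)
  have zero: "F (\<gamma> t) = 0" if "t \<in> UNIV" "dist t 0 < D" for t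
  proof -
    have "\<gamma> t \<in> M" using e(2)[of t] that by (simp add: D_def)
    moreover have "\<gamma> t \<in> ball q e0" using d(2)[of t] that g0 by (simp add: dist_commute D_def)
    ultimately show ?thesis using MU e0 by blast
  qed
  have "((\<lambda>t. 0::'b) has_derivative (\<lambda>s. blinfun_apply (Df q) (s *\<^sub>R v))) (at 0)"
    by (rule has_derivative_transform_within[OF comp Dpos _ zero]) auto
  moreover have "((\<lambda>t. 0::'b) has_derivative (\<lambda>s. 0)) (at (0::real))" by simp
  ultimately have "(\<lambda>s. blinfun_apply (Df q) (s *\<^sub>R v)) = (\<lambda>s. 0)" by (rule has_derivative_unique)
  then have "blinfun_apply (Df q) (1 *\<^sub>R v) = 0" by metis
  then show "v \<in> {v. blinfun_apply (Df q) v = 0}" by simp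
next
  have F0: "F q = 0" using qM U MU by auto
  fix v assume "v \<in> {v. blinfun_apply (Df q) v = 0}"
  then have v: "blinfun_apply (Df q) v = 0" by simp
  obtain \<gamma> where g: "\<gamma> 0 = q" "(\<gamma> has_vector_derivative v) (at 0)"
    and e: "\<exists>\<epsilon>>0. \<forall>t. \<bar>t\<bar> < \<epsilon> \<longrightarrow> \<gamma> t \<in> U \<and> F (\<gamma> t) = 0"
    using curve_exists[OF U F0 der cont rng v] by blast
  have "\<exists>\<epsilon>>0. \<forall>t. \<bar>t\<bar> < \<epsilon> \<longrightarrow> \<gamma> t \<in> M" using e MU by blast
  then show "v \<in> tangent_space M q" unfolding tangent_space_def using g by blast
qed




lemma taylor2:
  fixes \<rho> :: "'a::euclidean_space \<Rightarrow> real"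
  assumes d1: "\<And>z. z \<in> closed_segment q x \<Longrightarrow> (\<rho> has_derivative blinfun_apply (D\<rho> z)) (at z)"
    and d2: "\<And>z. z \<in> closed_segment q x \<Longrightarrow> (D\<rho> has_derivative blinfun_apply (D2\<rho> z)) (at z)"
  shows "\<exists>t. 0 \<le> t \<and> t \<le> 1 \<and> \<rho> x = \<rho> q + D\<rho> q (x - q) + (1/2) * D2\<rho> (q + t *\<^sub>R (x - q)) (x - q) (x - q)"
proof (cases "x = q")
  case True then show ?thesis by (intro exI[of _ 0]) simp
next
  case False
  define h where "h = x - q"
  define l where "l = (\<lambda>t::real. q + t *\<^sub>R h)"
  have lin: "l t \<in> closed_segment q x" if "0 \<le> t" "t \<le> 1" for t
  proof -
    have "l t = (1 - t) *\<^sub>R q + t *\<^sub>R x" by (simp add: l_def h_def algebra_simps)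
    then show ?thesis unfolding closed_segment_def using that by blast
  qed
  have dl: "(l has_derivative (\<lambda>s. s *\<^sub>R h)) (at t)" for t
    unfolding l_def by (auto intro!: derivative_eq_intros)
  define diff where "diff = (\<lambda>(m::nat) (t::real). if m = 0 then \<rho> (l t) else if m = 1 then D\<rho> (l t) h else D2\<rho> (l t) h h)"
  have D: "\<forall>m t. m < 2 \<and> 0 \<le> t \<and> t \<le> 1 \<longrightarrow> DERIV (diff m) t :> diff (Suc m) t"
  proof (intro allI impI)
    fix m :: nat and t :: real assume mt: "m < 2 \<and> 0 \<le> t \<and> t \<le> 1"
    have seg: "l t \<in> closed_segment q x" using mt lin by simp
    show "DERIV (diff m) t :> diff (Suc m) t"
    proof (cases "m = 0")
      case True
      have "((\<lambda>t. \<rho> (l t)) has_derivative (\<lambda>s. D\<rho> (l t) (s *\<^sub>R h))) (at t)"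
        using has_derivative_compose[OF dl d1[OF seg]] .
      moreover have "(\<lambda>s. D\<rho> (l t) (s *\<^sub>R h)) = (*) (D\<rho> (l t) h)"
        by (rule ext) (simp add: blinfun.scaleR_right)
      ultimately show ?thesis using True by (simp add: diff_def has_field_derivative_def)
    next
      case False then have m1: "m = 1" using mt by simp
      have "((\<lambda>t. D\<rho> (l t)) has_derivative (\<lambda>s. D2\<rho> (l t) (s *\<^sub>R h))) (at t)"
        using has_derivative_compose[OF dl d2[OF seg]] .
      then have "((\<lambda>t. D\<rho> (l t) h) has_derivative (\<lambda>s. D2\<rho> (l t) (s *\<^sub>R h) h)) (at t)"
        using has_derivative_compose[OF _ bounded_linear_imp_has_derivative[OF blinfun.bounded_linear_left[of h]]]
        by blast
      moreover have "(\<lambda>s. D2\<rho> (l t) (s *\<^sub>R h) h) = (*) (D2\<rho> (l t) h h)"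
        by (rule ext) (simp add: blinfun.scaleR_right blinfun.scaleR_left)
      ultimately show ?thesis using m1 by (simp add: diff_def has_field_derivative_def)
    qed
  qed
  obtain t where t: "0 < t" "t < 1"
    "diff 0 1 = (\<Sum>m<2. diff m 0 / fact m * (1 - 0)^m) + diff 2 t / fact 2 * (1 - 0)^2"
    using Taylor[where n=2 and diff=diff and f="diff 0" and a=0 and b=1 and c=0 and x=1] D by auto
  have "\<rho> x = \<rho> q + D\<rho> q h + (1/2) * D2\<rho> (l t) h h"
    using t(3) by (simp add: diff_def numeral_2_eq_2 l_def h_def)
  then show ?thesis using t by (intro exI[of _ t]) (simp add: l_def h_def)
qed




locale cdom =
  fixes \<Omega> :: "'a::euclidean_space set" and U :: "'a set" and \<rho> :: "'a \<Rightarrow> real"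
    and D\<rho> :: "'a \<Rightarrow> 'a \<Rightarrow>\<^sub>L real" and D2\<rho> :: "'a \<Rightarrow> 'a \<Rightarrow>\<^sub>L ('a \<Rightarrow>\<^sub>L real)" and \<kappa> :: real
  assumes cvx: "convex \<Omega>" and opn: "open \<Omega>" and bdd: "bounded \<Omega>"
    and U: "open U" and frU: "frontier \<Omega> \<subseteq> U"
    and d\<rho>: "\<And>x. x \<in> U \<Longrightarrow> (\<rho> has_derivative blinfun_apply (D\<rho> x)) (at x)"
    and d2\<rho>: "\<And>x. x \<in> U \<Longrightarrow> (D\<rho> has_derivative blinfun_apply (D2\<rho> x)) (at x)"
    and c2: "continuous_on U D2\<rho>"
    and \<Omega>U: "\<Omega> \<inter> U = {x\<in>U. \<rho> x < 0}"
    and nz: "\<And>x. x \<in> frontier \<Omega> \<Longrightarrow> D\<rho> x \<noteq> 0"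
    and kpos: "\<kappa> > 0"
    and hess: "\<And>x v. x \<in> frontier \<Omega> \<Longrightarrow> D\<rho> x v = 0 \<Longrightarrow> \<kappa> * norm (D\<rho> x) * (norm v)\<^sup>2 \<le> D2\<rho> x v v"
begin

definition grad where "grad x = (\<Sum>b\<in>Basis. D\<rho> x b *\<^sub>R b)"
definition nu where "nu x = - (1 / norm (grad x)) *\<^sub>R grad x"

lemma int\<Omega>: "interior \<Omega> = \<Omega>" using opn by (simp add: interior_open)

lemma frontier_iff: "x \<in> frontier \<Omega> \<longleftrightarrow> x \<in> closure \<Omega> \<and> x \<notin> \<Omega>"
  using int\<Omega> by (simp add: frontier_def)

lemma isCont_D: "x \<in> U \<Longrightarrow> isCont D\<rho> x" using d2\<rho> by (rule has_derivative_continuous)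
lemma isCont_rho: "x \<in> U \<Longrightarrow> isCont \<rho> x" using d\<rho> by (rule has_derivative_continuous)

lemma grad_inner: "D\<rho> x h = grad x \<bullet> h"
proof -
  have "D\<rho> x h = D\<rho> x (\<Sum>b\<in>Basis. (h \<bullet> b) *\<^sub>R b)" by (simp add: euclidean_representation)
  also have "\<dots> = (\<Sum>b\<in>Basis. (h \<bullet> b) * D\<rho> x b)" by (simp add: blinfun.sum_right blinfun.scaleR_right)
  also have "\<dots> = (\<Sum>b\<in>Basis. (D\<rho> x b *\<^sub>R b) \<bullet> h)"
    by (rule sum.cong[OF refl]) (simp add: inner_commute)
  also have "\<dots> = grad x \<bullet> h" by (simp only: grad_def inner_sum_left)
  finally show ?thesis .
qed

lemma grad_nz: "D\<rho> x \<noteq> 0 \<Longrightarrow> grad x \<noteq> 0"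
proof
  assume "D\<rho> x \<noteq> 0" "grad x = 0"
  then have "D\<rho> x = 0" by (intro blinfun_eqI) (simp add: grad_inner)
  then show False using \<open>D\<rho> x \<noteq> 0\<close> by simp
qed

lemma line_deriv:
  assumes "x \<in> U" shows "((\<lambda>t. \<rho> (x + t *\<^sub>R w)) has_real_derivative D\<rho> x w) (at 0)"
proof -
  have i: "((\<lambda>t. x + t *\<^sub>R w) has_derivative (\<lambda>s. s *\<^sub>R w)) (at 0)" by (auto intro!: derivative_eq_intros)
  have o: "(\<rho> has_derivative blinfun_apply (D\<rho> x)) (at ((\<lambda>t. x + t *\<^sub>R w) 0))" using d\<rho> assms by simp
  have "((\<lambda>t. \<rho> (x + t *\<^sub>R w)) has_derivative (\<lambda>s. D\<rho> x (s *\<^sub>R w))) (at 0)"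
    using has_derivative_compose[OF i o] .
  moreover have "(\<lambda>s. D\<rho> x (s *\<^sub>R w)) = (*) (D\<rho> x w)" by (rule ext) (simp add: blinfun.scaleR_right)
  ultimately show ?thesis by (simp add: has_field_derivative_def)
qed

lemma small_in_ball:
  fixes x w :: "'b::real_normed_vector"
  assumes "e > 0"
  obtains d where "d > 0" "\<And>h. 0 < h \<Longrightarrow> h < d \<Longrightarrow> x + h *\<^sub>R w \<in> ball x e"
proof -
  have nw: "0 < norm w + 1" by (rule add_nonneg_pos) simp_all
  show ?thesis
  proof (rule that[of "e / (norm w + 1)"])
    show "e / (norm w + 1) > 0" using assms nw by simp
    fix h :: real assume h: "0 < h" "h < e / (norm w + 1)"
    have "h * norm w \<le> h * (norm w + 1)" using h by simp
    also have "\<dots> < e / (norm w + 1) * (norm w + 1)" using h nw by (intro mult_strict_right_mono) auto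
    also have "\<dots> = e" using nw by simp
    finally have "norm (h *\<^sub>R w) < e" using h by simp
    then show "x + h *\<^sub>R w \<in> ball x e" by (simp add: dist_norm)
  qed
qed

lemma line_neg:
  assumes x: "x \<in> U" and w: "D\<rho> x w < 0" and r: "\<rho> x \<le> 0"
  obtains d where "d > 0" "\<And>h. 0 < h \<Longrightarrow> h < d \<Longrightarrow> x + h *\<^sub>R w \<in> \<Omega>"
proof -
  obtain d1 where d1: "d1 > 0" "\<And>h. h > 0 \<Longrightarrow> h < d1 \<Longrightarrow> \<rho> (x + 0 *\<^sub>R w) > \<rho> (x + (0 + h) *\<^sub>R w)"
    using DERIV_neg_dec_right[OF line_deriv[OF x] w] by blast
  obtain e where e: "e > 0" "ball x e \<subseteq> U" using U x unfolding open_contains_ball by force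
  obtain d2 where d2: "d2 > 0" "\<And>h. 0 < h \<Longrightarrow> h < d2 \<Longrightarrow> x + h *\<^sub>R w \<in> ball x e"
    using small_in_ball[OF e(1)] by blast
  show ?thesis
  proof (rule that[of "min d1 d2"])
    show "min d1 d2 > 0" using d1 d2 by simp
    fix h assume h: "0 < h" "h < min d1 d2"
    have "\<rho> (x + h *\<^sub>R w) < 0" using d1(2)[of h] h r by simp
    moreover have "x + h *\<^sub>R w \<in> U" using d2(2)[of h] h e by auto
    ultimately show "x + h *\<^sub>R w \<in> \<Omega>" using \<Omega>U by blast
  qed
qed

lemma rho_fr: assumes "x \<in> frontier \<Omega>" shows "\<rho> x = 0"
proof -
  have xU: "x \<in> U" using assms frU by auto
  have "x \<notin> \<Omega>" "x \<in> closure \<Omega>" using assms frontier_iff by auto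
  then have "\<not> \<rho> x < 0" using \<Omega>U xU by blast
  moreover have "\<not> \<rho> x > 0"
  proof
    assume pos: "\<rho> x > 0"
    have "\<exists>d>0. \<forall>y. dist y x < d \<longrightarrow> dist (\<rho> y) (\<rho> x) < \<rho> x"
      using isCont_rho[OF xU] pos unfolding continuous_at_eps_delta by simp
    then obtain d where d: "d > 0" "\<And>y. dist y x < d \<Longrightarrow> dist (\<rho> y) (\<rho> x) < \<rho> x" by blast
    obtain e where e: "e > 0" "ball x e \<subseteq> U" using U xU unfolding open_contains_ball by force
    obtain y where y: "y \<in> \<Omega>" "dist y x < min d e"
      using \<open>x \<in> closure \<Omega>\<close> d e unfolding closure_approachable by (metis min_less_iff_conj)
    have "y \<in> U" using y e by (auto simp: dist_commute)
    then have "\<rho> y < 0" using y \<Omega>U by blast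
    moreover have "dist (\<rho> y) (\<rho> x) < \<rho> x" using d y by simp
    ultimately show False by (simp add: dist_real_def)
  qed
  ultimately show ?thesis by simp
qed

lemma closure_pt:
  assumes xU: "x \<in> U" and r: "\<rho> x = 0" and g: "grad x \<noteq> 0"
  shows "x \<in> frontier \<Omega>"
proof -
  have neg: "D\<rho> x (- grad x) < 0" using g by (simp add: grad_inner)
  have r': "\<rho> x \<le> 0" using r by simp
  obtain d where d: "d > 0" "\<And>h. 0 < h \<Longrightarrow> h < d \<Longrightarrow> x + h *\<^sub>R (- grad x) \<in> \<Omega>"
    by (rule line_neg[OF xU neg r']) blast
  have "x \<in> closure \<Omega>" unfolding closure_approachable
  proof (intro allI impI)
    fix e :: real assume e: "e > 0"
    obtain d2 where d2: "d2 > 0" "\<And>h. 0 < h \<Longrightarrow> h < d2 \<Longrightarrow> x + h *\<^sub>R (- grad x) \<in> ball x e"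
      using small_in_ball[OF e] by blast
    define h where "h = min d d2 / 2"
    have h: "0 < h" "h < d" "h < d2" using d d2 by (auto simp: h_def)
    have "x + h *\<^sub>R (- grad x) \<in> \<Omega>" "x + h *\<^sub>R (- grad x) \<in> ball x e"
      using d(2)[OF h(1,2)] d2(2)[OF h(1,3)] by auto
    then show "\<exists>y\<in>\<Omega>. dist y x < e" by (metis mem_ball dist_commute)
  qed
  moreover have "x \<notin> \<Omega>"
  proof
    assume "x \<in> \<Omega>" then have "x \<in> \<Omega> \<inter> U" using xU by simp
    then have "\<rho> x < 0" using \<Omega>U by simp
    then show False using r by simp
  qed
  ultimately show ?thesis using frontier_iff by blast
qed

end




context cdom begin

lemma omega_neg: "x \<in> \<Omega> \<Longrightarrow> x \<in> U \<Longrightarrow> \<rho> x < 0"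
proof -
  assume "x \<in> \<Omega>" "x \<in> U" then have "x \<in> \<Omega> \<inter> U" by simp
  then show "\<rho> x < 0" using \<Omega>U by simp
qed

lemma line_pos:
  assumes x: "x \<in> U" and w: "D\<rho> x w > 0"
  obtains d where "d > 0" "\<And>h. 0 < h \<Longrightarrow> h < d \<Longrightarrow> \<rho> (x + h *\<^sub>R w) > \<rho> x \<and> x + h *\<^sub>R w \<in> U"
proof -
  obtain d1 where d1: "d1 > 0" "\<And>h. h > 0 \<Longrightarrow> h < d1 \<Longrightarrow> \<rho> (x + 0 *\<^sub>R w) < \<rho> (x + (0 + h) *\<^sub>R w)"
    using DERIV_pos_inc_right[OF line_deriv[OF x] w] by blast
  obtain e where e: "e > 0" "ball x e \<subseteq> U" using U x unfolding open_contains_ball by force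
  obtain d2 where d2: "d2 > 0" "\<And>h. 0 < h \<Longrightarrow> h < d2 \<Longrightarrow> x + h *\<^sub>R w \<in> ball x e"
    using small_in_ball[OF e(1)] by blast
  show ?thesis
  proof (rule that[of "min d1 d2"])
    show "min d1 d2 > 0" using d1 d2 by simp
    fix h assume h: "0 < h" "h < min d1 d2"
    have "\<rho> (x + h *\<^sub>R w) > \<rho> x" using d1(2)[of h] h by simp
    moreover have "x + h *\<^sub>R w \<in> U" using d2(2)[of h] h e by auto
    ultimately show "\<rho> (x + h *\<^sub>R w) > \<rho> x \<and> x + h *\<^sub>R w \<in> U" by simp
  qed
qed

lemma support_open:
  assumes q: "q \<in> frontier \<Omega>" and y: "y \<in> \<Omega>"
  shows "D\<rho> q (y - q) \<le> 0"
proof (rule ccontr)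
  assume "\<not> D\<rho> q (y - q) \<le> 0"
  then have pos: "D\<rho> q (y - q) > 0" by simp
  have qU: "q \<in> U" using q frU by auto
  obtain d where d: "d > 0" "\<And>h. 0 < h \<Longrightarrow> h < d \<Longrightarrow> \<rho> (q + h *\<^sub>R (y - q)) > \<rho> q \<and> q + h *\<^sub>R (y - q) \<in> U"
    by (rule line_pos[OF qU pos]) blast
  define h where "h = min d 1 / 2"
  have h: "0 < h" "h < d" "h \<le> 1" using d by (auto simp: h_def)
  have "q - h *\<^sub>R (q - y) \<in> interior \<Omega>"
    using mem_interior_closure_convex_shrink[OF cvx, of y q h] y q h int\<Omega> frontier_iff by auto
  then have "q + h *\<^sub>R (y - q) \<in> \<Omega>" using int\<Omega> by (simp add: algebra_simps)
  moreover have "\<rho> (q + h *\<^sub>R (y - q)) > 0" "q + h *\<^sub>R (y - q) \<in> U"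
    using d(2)[OF h(1,2)] rho_fr[OF q] by auto
  ultimately show False using omega_neg by fastforce
qed

lemma support:
  assumes q: "q \<in> frontier \<Omega>" and y: "y \<in> closure \<Omega>"
  shows "D\<rho> q (y - q) \<le> 0"
proof -
  have cl: "closed {y. D\<rho> q (y - q) \<le> 0}"
    by (intro closed_Collect_le continuous_intros)
  have "\<Omega> \<subseteq> {y. D\<rho> q (y - q) \<le> 0}" using support_open[OF q] by auto
  then have "closure \<Omega> \<subseteq> {y. D\<rho> q (y - q) \<le> 0}" using cl by (rule closure_minimal)
  then show ?thesis using y by auto
qed

lemma support_strict:
  assumes q: "q \<in> frontier \<Omega>" and y: "y \<in> \<Omega>"
  shows "D\<rho> q (y - q) < 0"
proof -
  have g: "grad q \<noteq> 0" using nz[OF q] grad_nz by blast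
  obtain e where e: "e > 0" "ball y e \<subseteq> \<Omega>" using opn y unfolding open_contains_ball by force
  obtain d where d: "d > 0" "\<And>h. 0 < h \<Longrightarrow> h < d \<Longrightarrow> y + h *\<^sub>R grad q \<in> ball y e"
    using small_in_ball[OF e(1)] by blast
  define h where "h = d / 2"
  have h: "0 < h" "h < d" using d by (auto simp: h_def)
  have "y + h *\<^sub>R grad q \<in> \<Omega>" using d(2)[OF h] e by auto
  then have "D\<rho> q (y + h *\<^sub>R grad q - q) \<le> 0" by (rule support_open[OF q])
  then have "D\<rho> q (y - q) + h * (grad q \<bullet> grad q) \<le> 0"
    by (simp add: grad_inner inner_add_right inner_diff_right algebra_simps)
  moreover have "h * (grad q \<bullet> grad q) > 0" using h g by simp
  ultimately show ?thesis by linarith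
qed

lemma range_D:
  assumes "grad q \<noteq> 0" shows "range (blinfun_apply (D\<rho> q)) = UNIV"
proof -
  have "y \<in> range (blinfun_apply (D\<rho> q))" for y
  proof
    show "y = D\<rho> q ((y / (grad q \<bullet> grad q)) *\<^sub>R grad q)"
      using assms by (simp add: grad_inner)
  qed simp
  then show ?thesis by auto
qed

lemma tangent_fr:
  assumes q: "q \<in> frontier \<Omega>"
  shows "tangent_space (frontier \<Omega>) q = {v. D\<rho> q v = 0}"
proof -
  have qU: "q \<in> U" using q frU by auto
  have n: "norm (D\<rho> q) > 0" using nz[OF q] by simp
  have "\<exists>e>0. \<forall>x. dist x q < e \<longrightarrow> dist (D\<rho> x) (D\<rho> q) < norm (D\<rho> q)"
    using isCont_D[OF qU] n unfolding continuous_at_eps_delta by simp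
  then obtain e where e: "e > 0" "\<And>x. dist x q < e \<Longrightarrow> dist (D\<rho> x) (D\<rho> q) < norm (D\<rho> q)" by blast
  define U' where "U' = U \<inter> ball q e"
  have oU': "open U'" using U by (simp add: U'_def open_Int)
  have qU': "q \<in> U'" using qU e by (simp add: U'_def)
  have Dnz: "D\<rho> x \<noteq> 0" if "x \<in> U'" for x
  proof
    assume "D\<rho> x = 0"
    moreover have "dist (D\<rho> x) (D\<rho> q) < norm (D\<rho> q)" using e(2)[of x] that by (simp add: U'_def dist_commute)
    ultimately show False by (simp add: dist_norm)
  qed
  have MU: "frontier \<Omega> \<inter> U' = {x\<in>U'. \<rho> x = 0}"
  proof (intro equalityI subsetI)
    fix x assume "x \<in> frontier \<Omega> \<inter> U'" then show "x \<in> {x\<in>U'. \<rho> x = 0}" using rho_fr by auto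
  next
    fix x assume x: "x \<in> {x\<in>U'. \<rho> x = 0}"
    then have "x \<in> U" "\<rho> x = 0" "grad x \<noteq> 0" using Dnz grad_nz by (auto simp: U'_def)
    then have "x \<in> frontier \<Omega>" by (rule closure_pt)
    then show "x \<in> frontier \<Omega> \<inter> U'" using x by simp
  qed
  have gq: "grad q \<noteq> 0" using nz[OF q] grad_nz by blast
  show ?thesis
  proof (rule tangent_space_eq[OF oU' qU' MU q])
    show "\<And>x. x \<in> U' \<Longrightarrow> (\<rho> has_derivative blinfun_apply (D\<rho> x)) (at x)" using d\<rho> by (simp add: U'_def)
    show "isCont D\<rho> q" using isCont_D[OF qU] .
    show "\<And>x. x \<in> U' \<Longrightarrow> \<rho> x \<in> range (blinfun_apply (D\<rho> q))" using range_D[OF gq] by simp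
  qed
qed

lemma normal:
  assumes q: "q \<in> frontier \<Omega>"
  shows "interior_normal \<Omega> q = nu q"
proof -
  have qU: "q \<in> U" using q frU by auto
  have g: "grad q \<noteq> 0" using nz[OF q] grad_nz by blast
  let ?g = "grad q"
  have ng: "norm ?g > 0" using g by simp
  have T: "tangent_space (frontier \<Omega>) q = {v. ?g \<bullet> v = 0}" using tangent_fr[OF q] by (simp add: grad_inner)
  show ?thesis unfolding interior_normal_def
  proof (rule the_equality)
    show "norm (nu q) = 1 \<and> (\<forall>v\<in>tangent_space (frontier \<Omega>) q. nu q \<bullet> v = 0) \<and>
        (\<exists>\<epsilon>>0. \<forall>t. 0 < t \<and> t < \<epsilon> \<longrightarrow> q + t *\<^sub>R nu q \<in> \<Omega>)"
    proof (intro conjI)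
      show "norm (nu q) = 1" using ng by (simp add: nu_def)
      show "\<forall>v\<in>tangent_space (frontier \<Omega>) q. nu q \<bullet> v = 0" using T by (simp add: nu_def)
      have neg: "D\<rho> q (nu q) < 0" using ng by (simp add: nu_def grad_inner)
      have r: "\<rho> q \<le> 0" using rho_fr[OF q] by simp
      obtain d where "d > 0" "\<And>h. 0 < h \<Longrightarrow> h < d \<Longrightarrow> q + h *\<^sub>R nu q \<in> \<Omega>"
        by (rule line_neg[OF qU neg r]) blast
      then show "\<exists>\<epsilon>>0. \<forall>t. 0 < t \<and> t < \<epsilon> \<longrightarrow> q + t *\<^sub>R nu q \<in> \<Omega>" by blast
    qed
  next
    fix \<nu> assume A: "norm \<nu> = 1 \<and> (\<forall>v\<in>tangent_space (frontier \<Omega>) q. \<nu> \<bullet> v = 0) \<and>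
        (\<exists>\<epsilon>>0. \<forall>t. 0 < t \<and> t < \<epsilon> \<longrightarrow> q + t *\<^sub>R \<nu> \<in> \<Omega>)"
    define l where "l = (\<nu> \<bullet> ?g) / (?g \<bullet> ?g)"
    define w where "w = \<nu> - l *\<^sub>R ?g"
    have gw: "?g \<bullet> w = 0" using g by (simp add: w_def l_def inner_diff_right inner_commute)
    then have "\<nu> \<bullet> w = 0" using A T by auto
    then have "w \<bullet> w = 0" using gw by (simp add: w_def inner_diff_left inner_commute)
    then have nl: "\<nu> = l *\<^sub>R ?g" by (simp add: w_def)
    obtain \<epsilon> where e: "\<epsilon> > 0" "\<And>t. 0 < t \<Longrightarrow> t < \<epsilon> \<Longrightarrow> q + t *\<^sub>R \<nu> \<in> \<Omega>" using A by blast
    have "q + (\<epsilon>/2) *\<^sub>R \<nu> \<in> \<Omega>" using e by simp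
    then have "D\<rho> q (q + (\<epsilon>/2) *\<^sub>R \<nu> - q) < 0" by (rule support_strict[OF q])
    then have "(\<epsilon>/2) * (?g \<bullet> \<nu>) < 0" by (simp add: grad_inner)
    then have "?g \<bullet> \<nu> < 0" using e(1) by (simp add: mult_less_0_iff)
    then have "l * (?g \<bullet> ?g) < 0" using nl by (simp add: inner_commute)
    moreover have "?g \<bullet> ?g > 0" using g by simp
    ultimately have lneg: "l < 0" by (simp add: mult_less_0_iff)
    have "\<bar>l\<bar> * norm ?g = 1" using A nl by simp
    then have "l = - 1 / norm ?g" using lneg ng by (simp add: field_simps)
    then show "\<nu> = nu q" using nl by (simp add: nu_def)
  qed
qed

end




lemma bil_bound:
  fixes X :: "'a::real_normed_vector \<Rightarrow>\<^sub>L ('b::real_normed_vector \<Rightarrow>\<^sub>L real)"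
  shows "\<bar>X a b\<bar> \<le> norm X * norm a * norm b"
proof -
  have "\<bar>X a b\<bar> \<le> norm (blinfun_apply X a) * norm b" using norm_blinfun[of "blinfun_apply X a" b] by simp
  also have "\<dots> \<le> norm X * norm a * norm b" by (intro mult_right_mono norm_blinfun) simp
  finally show ?thesis .
qed

context cdom begin

lemma grad_le: "norm (grad q) \<le> norm (D\<rho> q)"
proof (cases "grad q = 0")
  case False
  have "norm (grad q) * norm (grad q) = D\<rho> q (grad q)" by (simp add: grad_inner dot_square_norm power2_eq_square)
  also have "\<dots> \<le> norm (D\<rho> q) * norm (grad q)" using norm_blinfun[of "D\<rho> q" "grad q"] by simp
  finally show ?thesis using False by simp
qed simp

lemma local_i:
  assumes p: "p \<in> frontier \<Omega>"
  shows "\<exists>r>0. \<exists>c>0. \<forall>q x. q \<in> frontier \<Omega> \<inter> ball p r \<longrightarrow> x \<in> frontier \<Omega> \<inter> ball p r \<longrightarrow>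
            (x - q) \<bullet> nu q \<ge> c * (norm (x - q))\<^sup>2"
proof -
  have pU: "p \<in> U" using p frU by auto
  define N0 where "N0 = norm (D\<rho> p)"
  have N0: "N0 > 0" using nz[OF p] by (simp add: N0_def)
  define K where "K = \<kappa> * N0 / 4"
  have K: "K > 0" using kpos N0 by (simp add: K_def)
  define \<eta> where "\<eta> = K / 2"
  have eta: "\<eta> > 0" using K by (simp add: \<eta>_def)
  define M where "M = norm (D2\<rho> p) + \<eta>"
  have M: "M \<ge> 0" using eta by (simp add: M_def)
  define G where "G = 3 * N0 / 2"
  obtain r0 where r0: "r0 > 0" "ball p r0 \<subseteq> U" using U pU unfolding open_contains_ball by force
  have N02: "N0 / 2 > 0" using N0 by simp
  have "\<exists>e>0. \<forall>x. dist x p < e \<longrightarrow> dist (D\<rho> x) (D\<rho> p) < N0 / 2"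
    using isCont_D[OF pU] N02 unfolding continuous_at_eps_delta by blast
  then obtain r1 where r1: "r1 > 0" "\<And>x. dist x p < r1 \<Longrightarrow> dist (D\<rho> x) (D\<rho> p) < N0 / 2" by blast
  have "isCont D2\<rho> p" using c2 U pU by (simp add: continuous_on_eq_continuous_at)
  then have "\<exists>e>0. \<forall>x. dist x p < e \<longrightarrow> dist (D2\<rho> x) (D2\<rho> p) < \<eta>"
    using eta unfolding continuous_at_eps_delta by blast
  then obtain r2 where r2: "r2 > 0" "\<And>x. dist x p < r2 \<Longrightarrow> dist (D2\<rho> x) (D2\<rho> p) < \<eta>" by blast
  define r where "r = min r0 (min r1 r2)"
  have r: "r > 0" using r0 r1 r2 by (simp add: r_def)
  define R where "R = 2 * r"
  define A where "A = G + 2 * M * R + \<eta> * R"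
  have A: "A \<ge> 0" using N0 M eta r by (simp add: A_def G_def R_def)
  define c where "c = 1 / (2 * A / K + R)"
  have cpos: "c > 0" using A K r by (simp add: c_def R_def add_nonneg_pos)
  have inU: "z \<in> U" if "z \<in> ball p r" for z using that r0 by (auto simp: r_def)
  have Dlow: "norm (D\<rho> z) \<ge> N0 / 2" and Dup: "norm (D\<rho> z) \<le> G" if "z \<in> ball p r" for z
  proof -
    have "dist (D\<rho> z) (D\<rho> p) < N0 / 2" using r1(2)[of z] that by (simp add: r_def dist_commute)
    then have d: "norm (D\<rho> z - D\<rho> p) < N0 / 2" by (simp add: dist_norm)
    have "N0 \<le> norm (D\<rho> z) + norm (D\<rho> z - D\<rho> p)" unfolding N0_def using norm_triangle_sub[of "D\<rho> p" "D\<rho> z"]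
      by (simp add: norm_minus_commute)
    then show "norm (D\<rho> z) \<ge> N0 / 2" using d by simp
    have "norm (D\<rho> z) \<le> N0 + norm (D\<rho> z - D\<rho> p)" unfolding N0_def using norm_triangle_sub[of "D\<rho> z" "D\<rho> p"]
      by simp
    then show "norm (D\<rho> z) \<le> G" using d by (simp add: G_def)
  qed
  have D2near: "norm (D2\<rho> z - D2\<rho> p) \<le> \<eta>" if "z \<in> ball p r" for z
  proof -
    have "dist z p < r2" using that by (simp add: r_def dist_commute)
    then have "dist (D2\<rho> z) (D2\<rho> p) < \<eta>" by (rule r2(2))
    then show ?thesis by (simp add: dist_norm)
  qed
  have D2up: "norm (D2\<rho> z) \<le> M" if "z \<in> ball p r" for z
  proof -
    have "norm (D2\<rho> z) \<le> norm (D2\<rho> p) + norm (D2\<rho> z - D2\<rho> p)" using norm_triangle_sub[of "D2\<rho> z" "D2\<rho> p"] by simp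
    then show ?thesis using D2near[OF that] by (simp add: M_def)
  qed
  have main: "(x - q) \<bullet> nu q \<ge> c * (norm (x - q))\<^sup>2"
    if q: "q \<in> frontier \<Omega>" "q \<in> ball p r" and x: "x \<in> frontier \<Omega>" "x \<in> ball p r" for q x
  proof -
    define h where "h = x - q"
    define g where "g = grad q"
    have g: "g \<noteq> 0" using nz[OF q(1)] grad_nz by (simp add: g_def)
    have ng: "norm g > 0" using g by simp
    define \<nu> where "\<nu> = nu q"
    have nuv: "\<nu> = - (1 / norm g) *\<^sub>R g" by (simp add: \<nu>_def nu_def g_def)
    have nn: "norm \<nu> = 1" using ng by (simp add: nuv)
    define a where "a = h \<bullet> \<nu>"
    have gnu: "g = - norm g *\<^sub>R \<nu>" using ng by (simp add: nuv)
    have Dh: "D\<rho> q h = - norm g * a" by (simp add: grad_inner g_def[symmetric] a_def) (subst gnu, simp add: inner_commute)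
    have a0: "a \<ge> 0"
    proof -
      have "x \<in> closure \<Omega>" using x(1) frontier_iff by blast
      then have "D\<rho> q h \<le> 0" using support[OF q(1)] by (simp add: h_def)
      then show ?thesis using Dh ng by (simp add: zero_le_mult_iff)
    qed
    define v where "v = h - a *\<^sub>R \<nu>"
    have hv: "h = v + a *\<^sub>R \<nu>" by (simp add: v_def)
    have vnu: "v \<bullet> \<nu> = 0" using nn by (simp add: v_def a_def inner_diff_left power2_norm_eq_inner[symmetric])
    have vnu': "\<nu> \<bullet> v = 0" using vnu by (simp add: inner_commute)
    have Dv: "D\<rho> q v = 0" by (simp add: grad_inner g_def[symmetric]) (subst gnu, simp add: vnu')
    have hsq: "(norm h)\<^sup>2 = (norm v)\<^sup>2 + a\<^sup>2"
      unfolding hv using norm_add_Pythagorean[of v "a *\<^sub>R \<nu>"] vnu nn by (simp add: orthogonal_def)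
    have hR: "norm h < R"
    proof -
      have "norm h \<le> norm (x - p) + norm (p - q)" unfolding h_def using norm_triangle_ineq[of "x - p" "p - q"] by simp
      also have "\<dots> < r + r" using q(2) x(2) by (intro add_strict_mono) (auto simp: dist_norm norm_minus_commute)
      finally show ?thesis by (simp add: R_def)
    qed
    have "(norm v)\<^sup>2 \<le> (norm h)\<^sup>2" using hsq by simp
    then have "norm v \<le> norm h" by (rule power2_le_imp_le) simp
    then have vR: "norm v \<le> R" using hR by simp
    have "a\<^sup>2 \<le> (norm h)\<^sup>2" using hsq by simp
    then have "a \<le> norm h" by (rule power2_le_imp_le) simp
    then have aR: "a \<le> R" using hR by simp
    have segsub: "closed_segment q x \<subseteq> ball p r" using q(2) x(2) by (simp add: closed_segment_subset)
    obtain t where t: "0 \<le> t" "t \<le> 1" and tay: "\<rho> x = \<rho> q + D\<rho> q (x - q) + (1/2) * D2\<rho> (q + t *\<^sub>R (x - q)) (x - q) (x - q)"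
      using taylor2[of q x \<rho> D\<rho> D2\<rho>] segsub inU d\<rho> d2\<rho> by blast
    define \<xi> where "\<xi> = q + t *\<^sub>R h"
    have xi: "\<xi> \<in> ball p r"
    proof -
      have "\<xi> = (1 - t) *\<^sub>R q + t *\<^sub>R x" by (simp add: \<xi>_def h_def algebra_simps)
      then have "\<xi> \<in> closed_segment q x" unfolding closed_segment_def using t by blast
      then show ?thesis using segsub by blast
    qed
    have eq0: "- norm g * a + (1/2) * D2\<rho> \<xi> h h = 0"
      using tay rho_fr[OF q(1)] rho_fr[OF x(1)] Dh by (simp add: \<xi>_def h_def)
    define B where "B = D2\<rho> q"
    have xiq: "\<bar>D2\<rho> \<xi> h h - B h h\<bar> \<le> 2 * \<eta> * (norm h)\<^sup>2"
    proof -
      have "\<bar>D2\<rho> \<xi> h h - B h h\<bar> = \<bar>(D2\<rho> \<xi> - B) h h\<bar>" by (simp add: blinfun.diff_left)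
      also have "\<dots> \<le> norm (D2\<rho> \<xi> - B) * norm h * norm h" by (rule bil_bound)
      also have "norm (D2\<rho> \<xi> - B) \<le> 2 * \<eta>"
      proof -
        have "norm (D2\<rho> \<xi> - B) \<le> norm (D2\<rho> \<xi> - D2\<rho> p) + norm (D2\<rho> q - D2\<rho> p)"
          using norm_triangle_ineq4[of "D2\<rho> \<xi> - D2\<rho> p" "D2\<rho> q - D2\<rho> p"] by (simp add: B_def)
        then show ?thesis using D2near[OF xi] D2near[OF q(2)] by simp
      qed
      then have "norm (D2\<rho> \<xi> - B) * norm h * norm h \<le> 2 * \<eta> * norm h * norm h"
        by (intro mult_right_mono) simp_all
      finally show ?thesis by (simp add: power2_eq_square mult.assoc)
    qed
    have Bexp: "B h h = B v v + a * B v \<nu> + a * B \<nu> v + a * a * B \<nu> \<nu>"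
      unfolding hv by (simp add: blinfun.add_left blinfun.add_right blinfun.scaleR_left blinfun.scaleR_right algebra_simps)
    have MB: "norm B \<le> M" using D2up[OF q(2)] by (simp add: B_def)
    have b1: "\<bar>B v \<nu>\<bar> \<le> M * norm v"
    proof -
      have "norm B * norm v \<le> M * norm v" using MB by (rule mult_right_mono) simp
      then show ?thesis using bil_bound[of B v \<nu>] nn by simp
    qed
    have b2: "\<bar>B \<nu> v\<bar> \<le> M * norm v"
    proof -
      have "norm B * norm v \<le> M * norm v" using MB by (rule mult_right_mono) simp
      then show ?thesis using bil_bound[of B \<nu> v] nn by simp
    qed
    have b3: "\<bar>B \<nu> \<nu>\<bar> \<le> M" using bil_bound[of B \<nu> \<nu>] nn MB by simp
    have bvv: "B v v \<ge> 2 * K * (norm v)\<^sup>2"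
    proof -
      have "\<kappa> * norm (D\<rho> q) * (norm v)\<^sup>2 \<le> B v v" using hess[OF q(1) Dv] by (simp add: B_def)
      moreover have "2 * K * (norm v)\<^sup>2 \<le> \<kappa> * norm (D\<rho> q) * (norm v)\<^sup>2"
        using Dlow[OF q(2)] kpos by (intro mult_right_mono) (simp_all add: K_def)
      ultimately show ?thesis by simp
    qed
    have "- (M * norm v) \<le> B v \<nu>" using b1 by linarith
    then have "a * (- (M * norm v)) \<le> a * B v \<nu>" using a0 by (rule mult_left_mono)
    then have t1: "a * B v \<nu> \<ge> - (a * (M * norm v))" by simp
    have "- (M * norm v) \<le> B \<nu> v" using b2 by linarith
    then have "a * (- (M * norm v)) \<le> a * B \<nu> v" using a0 by (rule mult_left_mono)
    then have t2: "a * B \<nu> v \<ge> - (a * (M * norm v))" by simp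
    have "- M \<le> B \<nu> \<nu>" using b3 by linarith
    then have "(a * a) * (- M) \<le> (a * a) * B \<nu> \<nu>" using a0 by (intro mult_left_mono) simp_all
    then have t3: "a * a * B \<nu> \<nu> \<ge> - (a * a * M)" by simp
    have key: "K * (norm v)\<^sup>2 \<le> 2 * (a * norm g) + 2 * (a * (M * norm v)) + a * a * M + 2 * \<eta> * (a * a)"
    proof -
      have "D2\<rho> \<xi> h h \<ge> B h h - 2 * \<eta> * (norm h)\<^sup>2" using xiq by linarith
      then have "2 * (norm g * a) \<ge> B h h - 2 * \<eta> * ((norm v)\<^sup>2 + a * a)" using eq0 hsq
        by (simp add: power2_eq_square)
      then show ?thesis using Bexp bvv t1 t2 t3 by (simp add: \<eta>_def algebra_simps)
    qed
    have gG: "norm g \<le> G" using grad_le[of q] Dup[OF q(2)] by (simp add: g_def)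
    have k1: "a * norm g \<le> a * G" using gG a0 by (rule mult_left_mono)
    have k2: "a * (M * norm v) \<le> a * (M * R)" using vR a0 M by (intro mult_left_mono) simp_all
    have "a * M * a \<le> a * M * R" using aR a0 M by (intro mult_left_mono) simp_all
    then have k3: "a * a * M \<le> a * (M * R)" by (simp add: algebra_simps)
    have "2 * \<eta> * a * a \<le> 2 * \<eta> * a * R" using aR a0 eta by (intro mult_left_mono) simp_all
    then have k4: "2 * \<eta> * (a * a) \<le> 2 * (\<eta> * (a * R))" by (simp add: algebra_simps)
    have k5: "0 \<le> a * (M * R)" using a0 M r by (simp add: R_def)
    have AA: "2 * a * A = 2 * (a * G) + 4 * (a * (M * R)) + 2 * (\<eta> * (a * R))" by (simp add: A_def algebra_simps)
    have vbound: "K * (norm v)\<^sup>2 \<le> 2 * a * A" using key k1 k2 k3 k4 k5 AA by linarith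
    have v2: "(norm v)\<^sup>2 \<le> 2 * A / K * a" using vbound K by (simp add: field_simps)
    have a2: "a\<^sup>2 \<le> R * a" using aR a0 by (simp add: power2_eq_square mult_right_mono)
    have "(norm h)\<^sup>2 \<le> (2 * A / K + R) * a" using hsq v2 a2 by (simp add: algebra_simps)
    then have "c * (norm h)\<^sup>2 \<le> c * ((2 * A / K + R) * a)" using cpos by (intro mult_left_mono) simp_all
    also have "\<dots> = a"
    proof -
      have "2 * A / K + R > 0" using A K r by (simp add: R_def add_nonneg_pos)
      then show ?thesis by (simp add: c_def)
    qed
    finally show ?thesis by (simp add: a_def h_def \<nu>_def)
  qed
  show ?thesis using r cpos main by blast
qed

end




context cdom begin

lemma D_nu: assumes q: "q \<in> frontier \<Omega>" shows "D\<rho> q h = - norm (grad q) * (h \<bullet> nu q)"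
proof -
  have g: "grad q \<noteq> 0" using nz[OF q] grad_nz by blast
  then show ?thesis by (simp add: grad_inner nu_def inner_commute)
qed

lemma nu_nonneg: assumes q: "q \<in> frontier \<Omega>" and x: "x \<in> closure \<Omega>" shows "(x - q) \<bullet> nu q \<ge> 0"
proof -
  have g: "norm (grad q) > 0" using nz[OF q] grad_nz by simp
  have "D\<rho> q (x - q) \<le> 0" by (rule support[OF q x])
  then show ?thesis using g by (simp add: D_nu[OF q] zero_le_mult_iff)
qed

lemma nu_pos:
  assumes q: "q \<in> frontier \<Omega>" and x: "x \<in> frontier \<Omega>" and xq: "x \<noteq> q"
  shows "(x - q) \<bullet> nu q > 0"
proof (rule ccontr)
  assume "\<not> (x - q) \<bullet> nu q > 0"
  moreover have "(x - q) \<bullet> nu q \<ge> 0" using nu_nonneg[OF q] x frontier_iff by blast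
  ultimately have a0: "(x - q) \<bullet> nu q = 0" by simp
  obtain r c where r: "r > 0" "c > 0" and loc: "\<And>q' x'. q' \<in> frontier \<Omega> \<inter> ball q r \<Longrightarrow> x' \<in> frontier \<Omega> \<inter> ball q r \<Longrightarrow>
            (x' - q') \<bullet> nu q' \<ge> c * (norm (x' - q'))\<^sup>2"
    using local_i[OF q] by blast
  have nh: "norm (x - q) > 0" using xq by simp
  define t where "t = min 1 (r / (2 * norm (x - q)))"
  have t: "0 < t" "t \<le> 1" using r nh by (auto simp: t_def)
  have tn: "t * norm (x - q) < r"
  proof -
    have "t * norm (x - q) \<le> r / (2 * norm (x - q)) * norm (x - q)"
      using nh by (intro mult_right_mono) (simp_all add: t_def)
    also have "\<dots> = r / 2" using nh by simp
    finally show ?thesis using r by simp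
  qed
  define y where "y = q + t *\<^sub>R (x - q)"
  have ycl: "y \<in> closure \<Omega>"
  proof -
    have "y = (1 - t) *\<^sub>R q + t *\<^sub>R x" by (simp add: y_def algebra_simps)
    moreover have "q \<in> closure \<Omega>" "x \<in> closure \<Omega>" using q x frontier_iff by auto
    ultimately show ?thesis using convex_closure[OF cvx] t unfolding convex_alt by simp
  qed
  have ya: "(y - q) \<bullet> nu q = 0" using a0 by (simp add: y_def)
  have "y \<notin> \<Omega>"
  proof
    assume "y \<in> \<Omega>"
    then have "D\<rho> q (y - q) < 0" by (rule support_strict[OF q])
    then show False using ya by (simp add: D_nu[OF q])
  qed
  then have yf: "y \<in> frontier \<Omega>" using ycl frontier_iff by blast
  have yb: "y \<in> ball q r" using tn t by (simp add: y_def dist_norm)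
  have qb: "q \<in> ball q r" using r by simp
  have "(y - q) \<bullet> nu q \<ge> c * (norm (y - q))\<^sup>2" using loc yf yb q qb by blast
  moreover have "norm (y - q) > 0" using t nh by (simp add: y_def)
  ultimately have "(y - q) \<bullet> nu q > 0" using r(2) by (smt (verit) mult_pos_pos zero_less_power)
  then show False using ya by simp
qed

lemma isCont_grad: assumes "x \<in> U" shows "isCont grad x"
proof -
  have "isCont (\<lambda>x. \<Sum>b\<in>Basis. D\<rho> x b *\<^sub>R b) x"
    using isCont_D[OF assms] by (intro continuous_intros) auto
  moreover have "grad = (\<lambda>x. \<Sum>b\<in>Basis. D\<rho> x b *\<^sub>R b)" by (rule ext) (simp add: grad_def)
  ultimately show ?thesis by simp
qed

lemma nu_cont: "continuous_on (frontier \<Omega>) nu"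
proof (rule continuous_at_imp_continuous_on, rule ballI)
  fix x assume x: "x \<in> frontier \<Omega>"
  have xU: "x \<in> U" using x frU by auto
  have g: "grad x \<noteq> 0" using nz[OF x] grad_nz by blast
  have "isCont (\<lambda>x. - (1 / norm (grad x)) *\<^sub>R grad x) x"
    using isCont_grad[OF xU] g by (intro continuous_intros) auto
  moreover have "nu = (\<lambda>x. - (1 / norm (grad x)) *\<^sub>R grad x)" by (rule ext) (simp add: nu_def)
  ultimately show "isCont nu x" by simp
qed

lemma far:
  assumes G: "compact \<Gamma>" "\<Gamma> \<subseteq> frontier \<Omega>" and d: "\<delta> > 0"
  shows "\<exists>c>0. \<forall>q\<in>\<Gamma>. \<forall>x\<in>\<Gamma>. norm (x - q) \<ge> \<delta> \<longrightarrow> (x - q) \<bullet> nu q \<ge> c"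
proof -
  define K where "K = {z \<in> \<Gamma> \<times> \<Gamma>. norm (snd z - fst z) \<ge> \<delta>}"
  have cK: "compact K"
  proof -
    have cl: "closed {z :: 'a \<times> 'a. norm (snd z - fst z) \<ge> \<delta>}"
      by (intro closed_Collect_le continuous_intros)
    have "compact (\<Gamma> \<times> \<Gamma>)" using G(1) G(1) by (rule compact_Times)
    then have "compact ((\<Gamma> \<times> \<Gamma>) \<inter> {z. norm (snd z - fst z) \<ge> \<delta>})" using cl by (rule compact_Int_closed)
    moreover have "K = (\<Gamma> \<times> \<Gamma>) \<inter> {z. norm (snd z - fst z) \<ge> \<delta>}" by (auto simp: K_def)
    ultimately show ?thesis by simp
  qed
  define f where "f z = (snd z - fst z) \<bullet> nu (fst z)" for z :: "'a \<times> 'a"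
  have cf: "continuous_on K f"
  proof -
    have "continuous_on K (\<lambda>z. nu (fst z))"
      by (rule continuous_on_compose2[OF nu_cont continuous_on_fst]) (use G in \<open>auto simp: K_def\<close>)
    then show ?thesis unfolding f_def by (intro continuous_intros) auto
  qed
  show ?thesis
  proof (cases "K = {}")
    case True
    then show ?thesis by (intro exI[of _ 1]) (auto simp: K_def)
  next
    case False
    obtain z where z: "z \<in> K" "\<And>y. y \<in> K \<Longrightarrow> f z \<le> f y"
      using continuous_attains_inf[OF cK False cf] by blast
    have "f z > 0"
    proof -
      have "fst z \<in> frontier \<Omega>" "snd z \<in> frontier \<Omega>" "snd z \<noteq> fst z"
        using z(1) G d by (auto simp: K_def)
      then show ?thesis unfolding f_def by (rule nu_pos)
    qed
    then show ?thesis using z(2) by (intro exI[of _ "f z"]) (force simp: K_def f_def)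
  qed
qed

end




lemma local_ii:
  fixes F :: "'a::euclidean_space \<Rightarrow> 'a" and Df :: "'a \<Rightarrow> 'a \<Rightarrow>\<^sub>L 'a"
    and D2f :: "'a \<Rightarrow> 'a \<Rightarrow>\<^sub>L ('a \<Rightarrow>\<^sub>L 'a)"
  assumes U: "open U" and pU: "p \<in> U" and S: "subspace S"
    and der: "\<And>x. x \<in> U \<Longrightarrow> (F has_derivative blinfun_apply (Df x)) (at x)"
    and der2: "\<And>x. x \<in> U \<Longrightarrow> (Df has_derivative blinfun_apply (D2f x)) (at x)"
    and c2: "continuous_on U D2f"
    and FS: "\<And>x. x \<in> U \<Longrightarrow> F x \<in> S"
    and rng: "\<And>x. x \<in> U \<Longrightarrow> range (frechet_derivative F (at x)) = S"
    and MU: "\<Gamma> \<inter> U = {x\<in>U. F x = 0}"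
  shows "\<exists>r>0. \<exists>C. \<forall>q\<in>\<Gamma> \<inter> ball p r. tangent_space \<Gamma> q = {v. Df q v = 0} \<and>
            (\<forall>x\<in>\<Gamma> \<inter> ball p r. norm ((x - q) - orth_proj (tangent_space \<Gamma> q) (x - q)) \<le> C * (norm (x - q))\<^sup>2)"
proof -
  have rngD: "range (blinfun_apply (Df x)) = S" if "x \<in> U" for x
    using rng[OF that] frechet_derivative_at[OF der[OF that]] by simp
  have isc: "isCont Df x" if "x \<in> U" for x using der2[OF that] by (rule has_derivative_continuous)
  have tang: "tangent_space \<Gamma> q = {v. Df q v = 0}" if "q \<in> \<Gamma>" "q \<in> U" for q
    by (rule tangent_space_eq[OF U that(2) MU that(1) der isc[OF that(2)]]) (use FS rngD[OF that(2)] in auto)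
  let ?A = "blinfun_apply (Df p)"
  have linA: "linear ?A" by (simp add: blinfun.bounded_linear_right bounded_linear.linear)
  obtain c g where c: "c > 0" and glin: "linear g" and gb: "\<And>y. norm (g y) \<le> c * norm y"
    and gW: "\<And>y. g y \<in> orthogonal_comp (?A -` {0})"
    and gA: "\<And>w. w \<in> orthogonal_comp (?A -` {0}) \<Longrightarrow> g (?A w) = w"
    and Ag: "\<And>y. y \<in> range ?A \<Longrightarrow> ?A (g y) = y"
    and dec: "\<And>x. \<exists>w \<in> orthogonal_comp (?A -` {0}). ?A w = ?A x"
    by (rule lin_inv[OF linA]) blast
  define W where "W = orthogonal_comp (?A -` {0})"
  have sW: "subspace W" unfolding W_def by (rule subspace_orthogonal_comp)
  have spW: "span W = W" by (rule span_eq_iff[THEN iffD2, OF sW])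
  have wA: "norm w \<le> c * norm (?A w)" if "w \<in> W" for w
    using gb[of "?A w"] gA[of w] that by (simp add: W_def)
  obtain r0 where r0: "r0 > 0" "ball p r0 \<subseteq> U" using U pU unfolding open_contains_ball by force
  have c2': "1 / (2 * c) > 0" using c by simp
  have "\<exists>e>0. \<forall>x. dist x p < e \<longrightarrow> dist (Df x) (Df p) < 1 / (2 * c)"
    using isc[OF pU] c2' unfolding continuous_at_eps_delta by blast
  then obtain r1 where r1: "r1 > 0" "\<And>x. dist x p < r1 \<Longrightarrow> dist (Df x) (Df p) < 1 / (2 * c)" by blast
  have "isCont D2f p" using c2 U pU by (simp add: continuous_on_eq_continuous_at)
  then have "\<exists>e>0. \<forall>x. dist x p < e \<longrightarrow> dist (D2f x) (D2f p) < 1"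
    unfolding continuous_at_eps_delta by simp
  then obtain r2 where r2: "r2 > 0" "\<And>x. dist x p < r2 \<Longrightarrow> dist (D2f x) (D2f p) < 1" by blast
  define r where "r = min r0 (min r1 r2)"
  have r: "r > 0" using r0 r1 r2 by (simp add: r_def)
  define M where "M = norm (D2f p) + 1"
  have M: "M \<ge> 0" by (simp add: M_def add_nonneg_nonneg)
  have inU: "z \<in> U" if "z \<in> ball p r" for z using that r0 by (auto simp: r_def)
  have D2b: "norm (D2f z) \<le> M" if "z \<in> ball p r" for z
  proof -
    have "dist z p < r2" using that by (simp add: r_def dist_commute)
    then have "norm (D2f z - D2f p) < 1" using r2(2) by (simp add: dist_norm)
    moreover have "norm (D2f z) \<le> norm (D2f p) + norm (D2f z - D2f p)"
      using norm_triangle_sub[of "D2f z" "D2f p"] by simp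
    ultimately show ?thesis by (simp add: M_def)
  qed
  have Dnear: "norm (Df z - Df p) \<le> 1 / (2 * c)" if "z \<in> ball p r" for z
  proof -
    have "dist z p < r1" using that by (simp add: r_def dist_commute)
    then have "dist (Df z) (Df p) < 1 / (2 * c)" by (rule r1(2))
    then show ?thesis by (simp add: dist_norm)
  qed
  have lowb: "norm w \<le> 2 * c * norm (Df q w)" if q: "q \<in> ball p r" and w: "w \<in> W" for q w
  proof -
    have "norm (?A w) \<le> norm (Df q w) + norm ((Df p - Df q) w)"
      using norm_triangle_ineq[of "Df q w" "(Df p - Df q) w"] by (simp add: blinfun.diff_left)
    also have "norm ((Df p - Df q) w) \<le> norm (Df p - Df q) * norm w" by (rule norm_blinfun)
    also have "norm (Df p - Df q) * norm w \<le> 1 / (2 * c) * norm w"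
      using Dnear[OF q] by (intro mult_right_mono) (simp_all add: norm_minus_commute)
    finally have "norm (?A w) \<le> norm (Df q w) + 1 / (2 * c) * norm w" by simp
    then have "c * norm (?A w) \<le> c * (norm (Df q w) + 1 / (2 * c) * norm w)" using c by (intro mult_left_mono) simp_all
    also have "\<dots> = c * norm (Df q w) + norm w / 2" using c by (simp add: field_simps)
    finally have "c * norm (?A w) \<le> c * norm (Df q w) + norm w / 2" .
    then show ?thesis using wA[OF w] by simp
  qed
  have dimW: "dim W = dim S"
  proof -
    have "range ?A = ?A ` W"
    proof (intro equalityI subsetI)
      fix y assume "y \<in> range ?A"
      then obtain x where x: "y = ?A x" by blast
      obtain w where "w \<in> W" "?A w = ?A x" using dec[of x] by (auto simp: W_def)
      then show "y \<in> ?A ` W" using x by (metis image_eqI)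
    qed auto
    moreover have "inj_on ?A (span W)" unfolding spW
      by (rule inj_onI) (metis W_def gA)
    ultimately have "dim (range ?A) = dim W" using dim_image_eq[OF linA] by metis
    then show ?thesis using rngD[OF pU] by simp
  qed
  have onto: "blinfun_apply (Df q) ` W = S" if q: "q \<in> ball p r" for q
  proof -
    have linq: "linear (blinfun_apply (Df q))" by (simp add: blinfun.bounded_linear_right bounded_linear.linear)
    have inj: "inj_on (blinfun_apply (Df q)) (span W)" unfolding spW
    proof (rule inj_onI)
      fix w1 w2 assume w: "w1 \<in> W" "w2 \<in> W" "Df q w1 = Df q w2"
      then have "w1 - w2 \<in> W" using sW by (simp add: subspace_diff)
      then have "norm (w1 - w2) \<le> 2 * c * norm (Df q (w1 - w2))" by (rule lowb[OF q])
      then show "w1 = w2" using w by (simp add: blinfun.diff_right)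
    qed
    have sub: "blinfun_apply (Df q) ` W \<subseteq> S" using rngD[OF inU[OF q]] by auto
    have ss: "subspace (blinfun_apply (Df q) ` W)" using linq sW by (rule linear_subspace_image)
    have "dim (blinfun_apply (Df q) ` W) = dim W" using dim_image_eq[OF linq inj] .
    then show ?thesis using subspace_dim_equal[OF ss S sub] dimW by simp
  qed
  have main: "norm ((x - q) - orth_proj (tangent_space \<Gamma> q) (x - q)) \<le> 2 * c * M * (norm (x - q))\<^sup>2"
    if q: "q \<in> \<Gamma>" "q \<in> ball p r" and x: "x \<in> \<Gamma>" "x \<in> ball p r" for q x
  proof -
    define y where "y = x - q"
    have T: "tangent_space \<Gamma> q = {v. Df q v = 0}" using tang q inU by blast
    have sT: "subspace (tangent_space \<Gamma> q)" unfolding T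
      by (auto simp: subspace_def blinfun.add_right blinfun.scaleR_right)
    have "Df q y \<in> S" using rngD[OF inU[OF q(2)]] by auto
    then obtain w where w: "w \<in> W" "Df q w = Df q y" using onto[OF q(2)] by (metis imageE)
    have "y - w \<in> tangent_space \<Gamma> q" using w by (simp add: T blinfun.diff_right)
    then have "norm (y - orth_proj (tangent_space \<Gamma> q) y) \<le> norm (y - (y - w))" by (rule orth_proj_min[OF sT])
    also have "\<dots> = norm w" by simp
    also have "\<dots> \<le> 2 * c * norm (Df q y)" using lowb[OF q(2) w(1)] w(2) by simp
    also have "norm (Df q y) \<le> M * norm y * norm y"
    proof -
      have F0: "F x = 0" "F q = 0" using MU q x inU by auto
      have segsub: "closed_segment q x \<subseteq> ball p r" using q(2) x(2) by (simp add: closed_segment_subset)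
      have "norm (F x - F q - Df q (x - q)) \<le> (M * norm y) * norm (x - q)"
      proof (rule mvt_lin[OF convex_closed_segment])
        fix z assume z: "z \<in> closed_segment q x"
        show "(F has_derivative blinfun_apply (Df z)) (at z)" using der inU segsub z by blast
        have "norm (Df z - Df q) \<le> M * norm (z - q)"
          by (rule lipschitz_D[OF convex_ball der2 D2b _ q(2)]) (use inU segsub z in auto)
        also have "\<dots> \<le> M * norm y" using segment_bound1[OF z] M by (simp add: y_def mult_left_mono)
        finally show "norm (Df z - Df q) \<le> M * norm y" .
      qed simp_all
      then show ?thesis using F0 by (simp add: y_def)
    qed
    finally have "norm (y - orth_proj (tangent_space \<Gamma> q) y) \<le> 2 * c * (M * norm y * norm y)"
      using c by simp
    then show ?thesis by (simp add: y_def power2_eq_square mult.assoc)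
  qed
  have "\<forall>q\<in>\<Gamma> \<inter> ball p r. tangent_space \<Gamma> q = {v. Df q v = 0} \<and>
            (\<forall>x\<in>\<Gamma> \<inter> ball p r. norm ((x - q) - orth_proj (tangent_space \<Gamma> q) (x - q)) \<le> (2 * c * M) * (norm (x - q))\<^sup>2)"
    using tang inU main by blast
  then show ?thesis using r by blast
qed




lemma N_le:
  fixes V :: "'a::euclidean_space set"
  assumes V: "subspace V" and nn: "norm \<nu> = 1" and perp: "\<And>v. v \<in> V \<Longrightarrow> \<nu> \<bullet> v = 0"
  shows "norm (y - orth_proj V y - (y \<bullet> \<nu>) *\<^sub>R \<nu>) \<le> norm (y - orth_proj V y)"
proof -
  define z where "z = y - orth_proj V y"
  have "orth_proj V y \<in> V" using orth_proj_char[OF V] by blast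
  then have "\<nu> \<bullet> orth_proj V y = 0" by (rule perp)
  then have "orth_proj V y \<bullet> \<nu> = 0" by (simp add: inner_commute)
  then have zn: "z \<bullet> \<nu> = y \<bullet> \<nu>" by (simp add: z_def inner_diff_left)
  have nn2: "\<nu> \<bullet> \<nu> = 1" using nn by (simp add: dot_square_norm)
  define t where "t = z \<bullet> \<nu>"
  have tn: "\<nu> \<bullet> z = t" by (simp add: t_def inner_commute)
  have "(norm (z - t *\<^sub>R \<nu>))\<^sup>2 = (z - t *\<^sub>R \<nu>) \<bullet> (z - t *\<^sub>R \<nu>)" by (simp add: power2_norm_eq_inner)
  also have "\<dots> = z \<bullet> z - t * (z \<bullet> \<nu>) - t * (\<nu> \<bullet> z) + t * t * (\<nu> \<bullet> \<nu>)"
    by (simp add: inner_diff_left inner_diff_right algebra_simps)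
  also have "\<dots> = (norm z)\<^sup>2 - t\<^sup>2" using nn2 tn by (simp add: t_def[symmetric] dot_square_norm power2_eq_square)
  finally have "(norm (z - (z \<bullet> \<nu>) *\<^sub>R \<nu>))\<^sup>2 = (norm z)\<^sup>2 - (z \<bullet> \<nu>)\<^sup>2" by (simp add: t_def)
  then have "(norm (z - (z \<bullet> \<nu>) *\<^sub>R \<nu>))\<^sup>2 \<le> (norm z)\<^sup>2" by simp
  then have "norm (z - (z \<bullet> \<nu>) *\<^sub>R \<nu>) \<le> norm z" by (rule power2_le_imp_le) simp
  then show ?thesis using zn by (simp add: z_def)
qed

context cdom begin

lemma perp_nu:
  assumes G: "\<Gamma> \<subseteq> frontier \<Omega>" and q: "q \<in> \<Gamma>" and v: "v \<in> tangent_space \<Gamma> q"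
  shows "nu q \<bullet> v = 0"
proof -
  have qf: "q \<in> frontier \<Omega>" using G q by auto
  have "v \<in> tangent_space (frontier \<Omega>) q" using v G unfolding tangent_space_def by blast
  then have "D\<rho> q v = 0" using tangent_fr[OF qf] by simp
  moreover have "norm (grad q) > 0" using nz[OF qf] grad_nz by simp
  ultimately show ?thesis by (simp add: D_nu[OF qf] inner_commute)
qed

lemma Loc:
  assumes G: "\<Gamma> \<subseteq> frontier \<Omega>" and sub: "C2_submanifold \<Gamma> k" and p: "p \<in> \<Gamma>"
  shows "\<exists>r>0. \<exists>C>0. \<forall>q\<in>\<Gamma> \<inter> ball p r. subspace (tangent_space \<Gamma> q) \<and>
     (\<forall>x\<in>\<Gamma> \<inter> ball p r. norm ((x - q) - orth_proj (tangent_space \<Gamma> q) (x - q) - ((x - q) \<bullet> nu q) *\<^sub>R nu q)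
          \<le> C * ((x - q) \<bullet> nu q))"
proof -
  obtain V and F :: "'a \<Rightarrow> 'a" and S :: "'a set" where V: "open V" "p \<in> V" "subspace S" "C2_on V F" "\<forall>x\<in>V. F x \<in> S"
    "\<forall>x\<in>V. range (frechet_derivative F (at x)) = S" "\<Gamma> \<inter> V = {x\<in>V. F x = 0}"
    using sub p unfolding C2_submanifold_def by blast
  obtain Df D2f where D: "\<forall>x\<in>V. (F has_derivative blinfun_apply (Df x)) (at x)"
    "\<forall>x\<in>V. (Df has_derivative blinfun_apply (D2f x)) (at x)" "continuous_on V D2f"
    using V(4) unfolding C2_on_def by blast
  obtain r1 C1 where r1: "r1 > 0" and L2: "\<forall>q\<in>\<Gamma> \<inter> ball p r1. tangent_space \<Gamma> q = {v. Df q v = 0} \<and>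
            (\<forall>x\<in>\<Gamma> \<inter> ball p r1. norm ((x - q) - orth_proj (tangent_space \<Gamma> q) (x - q)) \<le> C1 * (norm (x - q))\<^sup>2)"
    using local_ii[OF V(1) V(2) V(3), of F Df D2f \<Gamma>] D V(5) V(6) V(7) by blast
  have pf: "p \<in> frontier \<Omega>" using G p by auto
  obtain r2 c2 where r2: "r2 > 0" "c2 > 0" and L1: "\<forall>q x. q \<in> frontier \<Omega> \<inter> ball p r2 \<longrightarrow> x \<in> frontier \<Omega> \<inter> ball p r2 \<longrightarrow>
            (x - q) \<bullet> nu q \<ge> c2 * (norm (x - q))\<^sup>2"
    using local_i[OF pf] by blast
  define r where "r = min r1 r2"
  define C where "C = (max C1 0 + 1) / c2"
  have r: "r > 0" using r1 r2 by (simp add: r_def)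
  have C: "C > 0" using r2 by (simp add: C_def add_nonneg_pos)
  have "\<forall>q\<in>\<Gamma> \<inter> ball p r. subspace (tangent_space \<Gamma> q) \<and>
     (\<forall>x\<in>\<Gamma> \<inter> ball p r. norm ((x - q) - orth_proj (tangent_space \<Gamma> q) (x - q) - ((x - q) \<bullet> nu q) *\<^sub>R nu q)
          \<le> C * ((x - q) \<bullet> nu q))"
  proof (intro ballI conjI)
    fix q assume q: "q \<in> \<Gamma> \<inter> ball p r"
    have q1: "q \<in> \<Gamma> \<inter> ball p r1" and q2: "q \<in> frontier \<Omega> \<inter> ball p r2" using q G by (auto simp: r_def)
    have T: "tangent_space \<Gamma> q = {v. Df q v = 0}" using L2 q1 by blast
    show sT: "subspace (tangent_space \<Gamma> q)" unfolding T
      by (auto simp: subspace_def blinfun.add_right blinfun.scaleR_right)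
    fix x assume x: "x \<in> \<Gamma> \<inter> ball p r"
    have x1: "x \<in> \<Gamma> \<inter> ball p r1" and x2: "x \<in> frontier \<Omega> \<inter> ball p r2" using x G by (auto simp: r_def)
    have qf: "q \<in> frontier \<Omega>" using q2 by simp
    have nn: "norm (nu q) = 1" using nz[OF qf] grad_nz by (simp add: nu_def)
    have "norm ((x - q) - orth_proj (tangent_space \<Gamma> q) (x - q) - ((x - q) \<bullet> nu q) *\<^sub>R nu q)
        \<le> norm ((x - q) - orth_proj (tangent_space \<Gamma> q) (x - q))"
      by (rule N_le[OF sT nn]) (rule perp_nu[OF G], use q in auto)
    also have "\<dots> \<le> C1 * (norm (x - q))\<^sup>2" using L2 q1 x1 by blast
    also have "\<dots> \<le> (max C1 0 + 1) * (norm (x - q))\<^sup>2" by (intro mult_right_mono) auto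
    also have "\<dots> \<le> (max C1 0 + 1) * (((x - q) \<bullet> nu q) / c2)"
    proof (rule mult_left_mono)
      have "c2 * (norm (x - q))\<^sup>2 \<le> (x - q) \<bullet> nu q" using L1 q2 x2 by blast
      then show "(norm (x - q))\<^sup>2 \<le> ((x - q) \<bullet> nu q) / c2" using r2 by (simp add: field_simps)
    qed (simp add: add_nonneg_nonneg)
    also have "\<dots> = C * ((x - q) \<bullet> nu q)" by (simp add: C_def)
    finally show "norm ((x - q) - orth_proj (tangent_space \<Gamma> q) (x - q) - ((x - q) \<bullet> nu q) *\<^sub>R nu q)
          \<le> C * ((x - q) \<bullet> nu q)" .
  qed
  then show ?thesis using r C by blast
qed

end




theorem lemma3p3:
  fixes \<Omega> \<Gamma> :: "'a::euclidean_space set" and m n :: nat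
  assumes "DIM('a) = m + n" and "m \<ge> 1"
    and "bounded \<Omega>" and "open \<Omega>" and "C2_uniformly_convex_domain \<Omega>"
    and "\<Gamma> \<subseteq> frontier \<Omega>" and "compact \<Gamma>" and "C2_submanifold \<Gamma> (m - 1)"
  shows "\<exists>\<theta>. 0 < \<theta> \<and> \<theta> < pi / 2 \<and>
    convex hull \<Gamma> \<subseteq> (\<Inter>q\<in>\<Gamma>. (\<lambda>y. q + y) ` wedge (tangent_space \<Gamma> q) (interior_normal \<Omega> q) \<theta>)"
proof -
  have cvx: "convex \<Omega>" using assms(5) by (simp add: C2_uniformly_convex_domain_def)
  have "\<exists>U (\<rho> :: 'a \<Rightarrow> real) (D\<rho> :: 'a \<Rightarrow> 'a \<Rightarrow>\<^sub>L real) (D2\<rho> :: 'a \<Rightarrow> 'a \<Rightarrow>\<^sub>L ('a \<Rightarrow>\<^sub>L real)) \<kappa>.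
        open U \<and> frontier \<Omega> \<subseteq> U \<and>
        (\<forall>x\<in>U. (\<rho> has_derivative blinfun_apply (D\<rho> x)) (at x)) \<and>
        (\<forall>x\<in>U. (D\<rho> has_derivative blinfun_apply (D2\<rho> x)) (at x)) \<and>
        continuous_on U D2\<rho> \<and>
        \<Omega> \<inter> U = {x\<in>U. \<rho> x < 0} \<and>
        (\<forall>x\<in>frontier \<Omega>. D\<rho> x \<noteq> 0) \<and>
        \<kappa> > 0 \<and>
        (\<forall>x\<in>frontier \<Omega>. \<forall>v. D\<rho> x v = 0 \<longrightarrow>
            D2\<rho> x v v \<ge> \<kappa> * norm (D\<rho> x) * (norm v)\<^sup>2)"
    using assms(5) by (simp add: C2_uniformly_convex_domain_def)
  then obtain U and \<rho> :: "'a \<Rightarrow> real" and D\<rho> :: "'a \<Rightarrow> 'a \<Rightarrow>\<^sub>L real"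
    and D2\<rho> :: "'a \<Rightarrow> 'a \<Rightarrow>\<^sub>L ('a \<Rightarrow>\<^sub>L real)" and \<kappa> where H:
        "open U" "frontier \<Omega> \<subseteq> U"
        "\<forall>x\<in>U. (\<rho> has_derivative blinfun_apply (D\<rho> x)) (at x)"
        "\<forall>x\<in>U. (D\<rho> has_derivative blinfun_apply (D2\<rho> x)) (at x)"
        "continuous_on U D2\<rho>"
        "\<Omega> \<inter> U = {x\<in>U. \<rho> x < 0}"
        "\<forall>x\<in>frontier \<Omega>. D\<rho> x \<noteq> 0"
        "\<kappa> > 0"
        "\<forall>x\<in>frontier \<Omega>. \<forall>v. D\<rho> x v = 0 \<longrightarrow> D2\<rho> x v v \<ge> \<kappa> * norm (D\<rho> x) * (norm v)\<^sup>2"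
    by blast
  interpret cdom \<Omega> U \<rho> D\<rho> D2\<rho> \<kappa>
    by (unfold_locales) (use cvx assms(3,4) H in auto)
  have Gfr: "\<Gamma> \<subseteq> frontier \<Omega>" by (rule assms(6))
  show ?thesis
  proof (cases "\<Gamma> = {}")
    case True
    then show ?thesis by (intro exI[of _ "pi/4"]) simp
  next
    case False
    define LP where "LP p r C \<longleftrightarrow> (\<forall>q\<in>\<Gamma> \<inter> ball p r. subspace (tangent_space \<Gamma> q) \<and>
     (\<forall>x\<in>\<Gamma> \<inter> ball p r. norm ((x - q) - orth_proj (tangent_space \<Gamma> q) (x - q) - ((x - q) \<bullet> nu q) *\<^sub>R nu q)
          \<le> C * ((x - q) \<bullet> nu q)))" for p r C
    have loc: "\<forall>p\<in>\<Gamma>. \<exists>r. r > 0 \<and> (\<exists>C>0. LP p r C)"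
      using Loc[OF Gfr assms(8)] unfolding LP_def by blast
    then obtain R where R: "\<forall>p\<in>\<Gamma>. R p > 0 \<and> (\<exists>C>0. LP p (R p) C)" by (metis bchoice)
    then have "\<forall>p\<in>\<Gamma>. \<exists>C. C > 0 \<and> LP p (R p) C" by blast
    then obtain Cf where Cf: "\<forall>p\<in>\<Gamma>. Cf p > 0 \<and> LP p (R p) (Cf p)" by (metis bchoice)
    have cov: "\<Gamma> \<subseteq> \<Union> ((\<lambda>p. ball p (R p / 2)) ` \<Gamma>)" using R by force
    obtain P where P: "P \<subseteq> \<Gamma>" "finite P" "\<Gamma> \<subseteq> \<Union> ((\<lambda>p. ball p (R p / 2)) ` P)"
      using compactE_image[OF assms(7) _ cov] by blast
    have Pne: "P \<noteq> {}" using P(3) False by auto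
    define \<delta> where "\<delta> = Min ((\<lambda>p. R p / 2) ` P)"
    have dpos: "\<delta> > 0" unfolding \<delta>_def using P R Pne by (subst Min_gr_iff) auto
    have dle: "\<delta> \<le> R p / 2" if "p \<in> P" for p unfolding \<delta>_def using P(2) that by (intro Min_le) auto
    define Cm where "Cm = Max (Cf ` P)"
    have Cle: "Cf p \<le> Cm" if "p \<in> P" for p unfolding Cm_def using P(2) that by (intro Max_ge) auto
    obtain cfar where cfar: "cfar > 0" "\<forall>q\<in>\<Gamma>. \<forall>x\<in>\<Gamma>. norm (x - q) \<ge> \<delta> \<longrightarrow> (x - q) \<bullet> nu q \<ge> cfar"
      using far[OF assms(7) Gfr dpos] by blast
    obtain B where B: "\<forall>x\<in>\<Gamma>. norm x \<le> B" using compact_imp_bounded[OF assms(7)] unfolding bounded_iff by blast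
    define Cfin where "Cfin = \<bar>Cm\<bar> + \<bar>2 * B / cfar\<bar> + 1"
    have Cfin: "Cfin > 0" by (simp add: Cfin_def add_nonneg_pos)
    have Cfin1: "Cm \<le> Cfin" unfolding Cfin_def using abs_ge_self[of Cm] abs_ge_zero[of "2 * B / cfar"] by linarith
    have Cfin2: "2 * B / cfar \<le> Cfin" unfolding Cfin_def using abs_ge_self[of "2 * B / cfar"] abs_ge_zero[of Cm] by linarith
    have key: "subspace (tangent_space \<Gamma> q) \<and>
       norm ((x - q) - orth_proj (tangent_space \<Gamma> q) (x - q) - ((x - q) \<bullet> nu q) *\<^sub>R nu q) \<le> Cfin * ((x - q) \<bullet> nu q)"
      if q: "q \<in> \<Gamma>" and x: "x \<in> \<Gamma>" for q x
    proof -
      obtain p where p: "p \<in> P" "q \<in> ball p (R p / 2)" using P(3) q by blast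
      have pG: "p \<in> \<Gamma>" using p P by auto
      have LPp: "LP p (R p) (Cf p)" and Rp: "R p > 0" using Cf R pG by auto
      have "dist p q < R p / 2" using p(2) by simp
      then have "dist p q < R p" using zero_le_dist[of p q] by linarith
      then have qb: "q \<in> \<Gamma> \<inter> ball p (R p)" using q by simp
      have sT: "subspace (tangent_space \<Gamma> q)" using LPp qb unfolding LP_def by blast
      have qf: "q \<in> frontier \<Omega>" "x \<in> frontier \<Omega>" using q x Gfr by auto
      have a0: "(x - q) \<bullet> nu q \<ge> 0" using nu_nonneg[OF qf(1)] qf(2) frontier_iff by blast
      have "norm ((x - q) - orth_proj (tangent_space \<Gamma> q) (x - q) - ((x - q) \<bullet> nu q) *\<^sub>R nu q) \<le> Cfin * ((x - q) \<bullet> nu q)"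
      proof (cases "norm (x - q) < \<delta>")
        case True
        have "dist p x \<le> dist p q + dist q x" by (rule dist_triangle)
        also have "\<dots> < R p / 2 + \<delta>" using p True by (intro add_strict_mono) (auto simp: dist_norm norm_minus_commute)
        also have "\<dots> \<le> R p" using dle[OF p(1)] by simp
        finally have xb: "x \<in> \<Gamma> \<inter> ball p (R p)" using x by simp
        have "norm ((x - q) - orth_proj (tangent_space \<Gamma> q) (x - q) - ((x - q) \<bullet> nu q) *\<^sub>R nu q) \<le> Cf p * ((x - q) \<bullet> nu q)"
          using LPp qb xb unfolding LP_def by blast
        also have "\<dots> \<le> Cfin * ((x - q) \<bullet> nu q)"
          using Cle[OF p(1)] Cfin1 a0 by (intro mult_right_mono) auto
        finally show ?thesis .
      next
        case False
        have af: "(x - q) \<bullet> nu q \<ge> cfar" using cfar q x False by auto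
        have nn: "norm (nu q) = 1" using nz[OF qf(1)] grad_nz by (simp add: nu_def)
        have "norm ((x - q) - orth_proj (tangent_space \<Gamma> q) (x - q) - ((x - q) \<bullet> nu q) *\<^sub>R nu q)
            \<le> norm ((x - q) - orth_proj (tangent_space \<Gamma> q) (x - q))"
          by (rule N_le[OF sT nn]) (rule perp_nu[OF Gfr q])
        also have "\<dots> \<le> norm ((x - q) - 0)" by (rule orth_proj_min[OF sT subspace_0[OF sT]])
        also have "\<dots> \<le> norm x + norm q" by (simp add: norm_triangle_ineq4)
        also have "\<dots> \<le> 2 * B"
        proof -
          have "norm x \<le> B" "norm q \<le> B" using B q x by auto
          then show ?thesis by linarith
        qed
        also have "\<dots> = (2 * B / cfar) * cfar" using cfar by simp
        also have "\<dots> \<le> (2 * B / cfar) * ((x - q) \<bullet> nu q)"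
        proof (rule mult_left_mono[OF af])
          have "0 \<le> norm x" by simp
          moreover have "norm x \<le> B" using B x by auto
          ultimately have "B \<ge> 0" by linarith
          then show "0 \<le> 2 * B / cfar" using cfar by simp
        qed
        also have "\<dots> \<le> Cfin * ((x - q) \<bullet> nu q)" using a0 Cfin2 by (intro mult_right_mono) auto
        finally show ?thesis .
      qed
      then show ?thesis using sT by simp
    qed
    define \<theta> where "\<theta> = arctan Cfin"
    have th: "0 < \<theta>" "\<theta> < pi / 2" "tan \<theta> = Cfin"
      unfolding \<theta>_def using Cfin arctan_ubound[of Cfin] tan_arctan[of Cfin] by simp_all
    have "convex hull \<Gamma> \<subseteq> (\<lambda>y. q + y) ` wedge (tangent_space \<Gamma> q) (interior_normal \<Omega> q) \<theta>" if q: "q \<in> \<Gamma>" for q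
    proof (rule hull_minimal)
      have qf: "q \<in> frontier \<Omega>" using q Gfr by auto
      have sT: "subspace (tangent_space \<Gamma> q)" using key[OF q q] by simp
      have "convex ((+) q ` wedge (tangent_space \<Gamma> q) (interior_normal \<Omega> q) \<theta>)"
        by (rule convex_translation[OF wedge_convex[OF sT]])
      then show "convex ((\<lambda>y. q + y) ` wedge (tangent_space \<Gamma> q) (interior_normal \<Omega> q) \<theta>)" by simp
      show "\<Gamma> \<subseteq> (\<lambda>y. q + y) ` wedge (tangent_space \<Gamma> q) (interior_normal \<Omega> q) \<theta>"
      proof
        fix x assume x: "x \<in> \<Gamma>"
        have "x - q \<in> wedge (tangent_space \<Gamma> q) (interior_normal \<Omega> q) \<theta>"
          using key[OF q x] th(3) normal[OF qf] by (simp add: wedge_def)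
        moreover have "x = q + (x - q)" by simp
        ultimately show "x \<in> (\<lambda>y. q + y) ` wedge (tangent_space \<Gamma> q) (interior_normal \<Omega> q) \<theta>" by blast
      qed
    qed
    then show ?thesis using th by blast
  qed
qed


end
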